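(* Let $d\in\mathbb N\cup\{\infty\}$. Let $k\ne0$ be a reproducing kernel over a non-empty set $D$ and ${\boldsymbol\gamma}\in\mathcal W_d$ with $\mathfrak Z^{{\boldsymbol\gamma},k}\ne\emptyset$; put $K=M^{{\boldsymbol\gamma},k}$. Let $l\ne0$ be a reproducing kernel over $D$ with $H(l)\subseteq H(1+k)$, and let $C^\downarrow>0$ be an upper bound on the norm of this embedding. Let ${\boldsymbol\gamma}_\ast\in\mathcal M_d$ with ${\boldsymbol\gamma}_\ast\le{\boldsymbol\gamma}$ and put ${\boldsymbol\gamma}_\ast^\downarrow=T^\downarrow_{d,C^\downarrow}{\boldsymbol\gamma}_\ast$. Then $\mathfrak Z^{{\boldsymbol\gamma},k}\subseteq\mathfrak Z^{{\boldsymbol\gamma}^\downarrow_\ast,l}$, and with $L^\downarrow_\ast=M^{{\boldsymbol\gamma}^\downarrow_\ast,l}$ we have $f|_{\mathfrak Z^{{\boldsymbol\gamma},k}}\in H(K)$ for all $f\in H(L^\downarrow_\ast)$, and the restriction map $H(L^\downarrow_\ast)\to H(K)$, $f\mapsto f|_{\mathfrak Z^{{\boldsymbol\gamma},k}}$, has norm at most one.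
   Context: For a reproducing kernel $M$ over a set $\mathfrak Z$, $H(M)$ is its RKHS with norm $\|\cdot\|_M$. Write $[d]=\{1,\dots,d\}$ if $d\in\mathbb N$, $[d]=\mathbb N$ if $d=\infty$; $[s]=\{1,\dots,s\}$. $\mathcal U_d$ is the set of finite subsets of $[d]$; $\mathcal W_d$ the set of families $(\gamma_u)_{u\in\mathcal U_d}$ of non-negative reals, ordered componentwise. $(\Delta_v{\boldsymbol\gamma})_u=\sum_{w\subseteq v}(-1)^{|w|}\gamma_{u\cup w}$; $\mathcal M_d$ is the set of weights with $\Delta_v{\boldsymbol\gamma}\ge0$ for all $v\in\mathcal U_d$. For $C>0$ and ${\boldsymbol\gamma}\in\mathcal M_d$: $(T^\downarrow_{d,C}{\boldsymbol\gamma})_u=C^{-2|u|}(\Delta_{[d]\setminus u}{\boldsymbol\gamma})_u$ if $d\in\mathbb N$, $=C^{-2|u|}\lim_{s\to\infty}(\Delta_{[s]\setminus u}{\boldsymbol\gamma})_u$ if $d=\infty$. For a reproducing kernel $m$ over $D$ and weights ${\boldsymbol\eta}$: $m_u(\mathbf x,\mathbf y)=\prod_{j\in u}m(x_j,y_j)$ ($m_\emptyset=1$) for $\mathbf x,\mathbf y\in D^{[d]}$; $\mathfrak Z^{{\boldsymbol\eta},m}=\{\mathbf x\in D^{[d]}:\sum_u\eta_um_u(\mathbf x,\mathbf x)<\infty\}$; and $M^{{\boldsymbol\eta},m}(\mathbf x,\mathbf y)=\sum_u\eta_um_u(\mathbf x,\mathbf y)$ on $\mathfrak Z^{{\boldsymbol\eta},m}\times\mathfrak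 Z^{{\boldsymbol\eta},m}$ (when non-empty). *)

theory Defs
  imports "HOL-Analysis.Analysis" "HOL-Library.Extended_Nat"
begin

text \<open>Real-valued kernels over a set Z (a subset of an ambient type).  Functions on Z
are represented as total functions; their values outside Z are irrelevant.\<close>

definition repr_kernel :: "'a set \<Rightarrow> ('a \<Rightarrow> 'a \<Rightarrow> real) \<Rightarrow> bool" where
  "repr_kernel Z M \<longleftrightarrow>
     (\<forall>x\<in>Z. \<forall>y\<in>Z. M x y = M y x) \<and>
     (\<forall>F a. finite F \<longrightarrow> F \<subseteq> Z \<longrightarrow> (\<Sum>x\<in>F. \<Sum>y\<in>F. a x * a y * M x y) \<ge> 0)"

text \<open>finite linear combinations of kernel sections M(.,y), y in Z, given by coefficients\<close>
definition fin_comb :: "'a set \<Rightarrow> ('a \<Rightarrow> real) \<Rightarrow> bool" where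
  "fin_comb Z c \<longleftrightarrow> finite {y. c y \<noteq> 0} \<and> {y. c y \<noteq> 0} \<subseteq> Z"

definition comb_eval :: "('a \<Rightarrow> 'a \<Rightarrow> real) \<Rightarrow> ('a \<Rightarrow> real) \<Rightarrow> 'a \<Rightarrow> real" where
  "comb_eval M c x = (\<Sum>y\<in>{y. c y \<noteq> 0}. c y * M x y)"

definition comb_sqnorm :: "('a \<Rightarrow> 'a \<Rightarrow> real) \<Rightarrow> ('a \<Rightarrow> real) \<Rightarrow> real" where
  "comb_sqnorm M c = (\<Sum>y\<in>{y. c y \<noteq> 0}. \<Sum>z\<in>{z. c z \<noteq> 0}. c y * c z * M y z)"

definition approx_seq :: "('a \<Rightarrow> 'a \<Rightarrow> real) \<Rightarrow> 'a set \<Rightarrow> ('a \<Rightarrow> real) \<Rightarrow> (nat \<Rightarrow> 'a \<Rightarrow> real) \<Rightarrow> bool" where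
  "approx_seq M Z f c \<longleftrightarrow>
     (\<forall>n. fin_comb Z (c n)) \<and>
     (\<forall>e>0. \<exists>N. \<forall>m\<ge>N. \<forall>n\<ge>N. comb_sqnorm M (\<lambda>y. c m y - c n y) < e) \<and>
     (\<forall>x\<in>Z. (\<lambda>n. comb_eval M (c n) x) \<longlonglongrightarrow> f x)"

definition rkhs :: "('a \<Rightarrow> 'a \<Rightarrow> real) \<Rightarrow> 'a set \<Rightarrow> ('a \<Rightarrow> real) set" where
  "rkhs M Z = {f. \<exists>c. approx_seq M Z f c}"

definition rkhs_norm :: "('a \<Rightarrow> 'a \<Rightarrow> real) \<Rightarrow> 'a set \<Rightarrow> ('a \<Rightarrow> real) \<Rightarrow> real" where
  "rkhs_norm M Z f =
     (THE r. \<exists>c. approx_seq M Z f c \<and> (\<lambda>n. sqrt (comb_sqnorm M (c n))) \<longlonglongrightarrow> r)"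

definition idx :: "enat \<Rightarrow> nat set" where
  "idx d = {j. 1 \<le> j \<and> enat j \<le> d}"

definition Uset :: "enat \<Rightarrow> nat set set" where
  "Uset d = {u. finite u \<and> u \<subseteq> idx d}"

definition weights :: "enat \<Rightarrow> (nat set \<Rightarrow> real) \<Rightarrow> bool" where
  "weights d \<gamma> \<longleftrightarrow> (\<forall>u\<in>Uset d. \<gamma> u \<ge> 0)"

definition weight_le :: "enat \<Rightarrow> (nat set \<Rightarrow> real) \<Rightarrow> (nat set \<Rightarrow> real) \<Rightarrow> bool" where
  "weight_le d \<gamma> \<eta> \<longleftrightarrow> (\<forall>u\<in>Uset d. \<gamma> u \<le> \<eta> u)"

definition Delta :: "nat set \<Rightarrow> (nat set \<Rightarrow> real) \<Rightarrow> nat set \<Rightarrow> real" where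
  "Delta v \<gamma> u = (\<Sum>w\<in>Pow v. (-1) ^ card w * \<gamma> (u \<union> w))"

definition Mweights :: "enat \<Rightarrow> (nat set \<Rightarrow> real) \<Rightarrow> bool" where
  "Mweights d \<gamma> \<longleftrightarrow> weights d \<gamma> \<and> (\<forall>v\<in>Uset d. \<forall>u\<in>Uset d. Delta v \<gamma> u \<ge> 0)"

definition Tdown :: "enat \<Rightarrow> real \<Rightarrow> (nat set \<Rightarrow> real) \<Rightarrow> nat set \<Rightarrow> real" where
  "Tdown d C \<gamma> u =
     (case d of
        enat n \<Rightarrow> (1 / C ^ (2 * card u)) * Delta ({1..n} - u) \<gamma> u
      | \<infinity> \<Rightarrow> (1 / C ^ (2 * card u)) * lim (\<lambda>s. Delta ({1..s} - u) \<gamma> u))"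

definition prodk :: "('a \<Rightarrow> 'a \<Rightarrow> real) \<Rightarrow> nat set \<Rightarrow> (nat \<Rightarrow> 'a) \<Rightarrow> (nat \<Rightarrow> 'a) \<Rightarrow> real" where
  "prodk m u x y = (\<Prod>j\<in>u. m (x j) (y j))"

text \<open>points of D^[d] are extensional functions on [d]\<close>
definition Zset :: "enat \<Rightarrow> 'a set \<Rightarrow> (nat set \<Rightarrow> real) \<Rightarrow> ('a \<Rightarrow> 'a \<Rightarrow> real) \<Rightarrow> (nat \<Rightarrow> 'a) set" where
  "Zset d D \<eta> m = {x \<in> PiE (idx d) (\<lambda>_. D). (\<lambda>u. \<eta> u * prodk m u x x) summable_on Uset d}"

definition Mker :: "enat \<Rightarrow> (nat set \<Rightarrow> real) \<Rightarrow> ('a \<Rightarrow> 'a \<Rightarrow> real) \<Rightarrow> (nat \<Rightarrow> 'a) \<Rightarrow> (nat \<Rightarrow> 'a) \<Rightarrow> real" where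
  "Mker d \<eta> m x y = (\<Sum>\<^sub>\<infinity>u\<in>Uset d. \<eta> u * prodk m u x y)"

end

theory Submission
  imports Defs
begin


definition qf :: "'a set \<Rightarrow> ('a \<Rightarrow> 'a \<Rightarrow> real) \<Rightarrow> ('a \<Rightarrow> real) \<Rightarrow> real" where
  "qf S M a = (\<Sum>x\<in>S. \<Sum>y\<in>S. a x * a y * M x y)"
definition bf :: "'a set \<Rightarrow> ('a \<Rightarrow> 'a \<Rightarrow> real) \<Rightarrow> ('a \<Rightarrow> real) \<Rightarrow> ('a \<Rightarrow> real) \<Rightarrow> real" where
  "bf S M a b = (\<Sum>x\<in>S. \<Sum>y\<in>S. a x * b y * M x y)"
definition ev :: "'a set \<Rightarrow> ('a \<Rightarrow> 'a \<Rightarrow> real) \<Rightarrow> ('a \<Rightarrow> real) \<Rightarrow> 'a \<Rightarrow> real" where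
  "ev S M a x = (\<Sum>y\<in>S. a y * M x y)"
definition psdon :: "'a set \<Rightarrow> ('a \<Rightarrow> 'a \<Rightarrow> real) \<Rightarrow> bool" where
  "psdon S M \<longleftrightarrow> (\<forall>a. qf S M a \<ge> 0)"
definition symon :: "'a set \<Rightarrow> ('a \<Rightarrow> 'a \<Rightarrow> real) \<Rightarrow> bool" where
  "symon S M \<longleftrightarrow> (\<forall>x\<in>S. \<forall>y\<in>S. M x y = M y x)"

lemma repr_kernel_iff: "repr_kernel Z M \<longleftrightarrow> symon Z M \<and> (\<forall>F. finite F \<and> F \<subseteq> Z \<longrightarrow> psdon F M)"
  unfolding repr_kernel_def symon_def psdon_def qf_def by blast

lemma symon_subset: "symon Z M \<Longrightarrow> S \<subseteq> Z \<Longrightarrow> symon S M"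
  unfolding symon_def by blast

lemma qf_bf: "qf S M a = bf S M a a" unfolding qf_def bf_def ..

lemma bf_ev: "bf S M a b = (\<Sum>x\<in>S. a x * ev S M b x)"
  unfolding bf_def ev_def by (simp add: sum_distrib_left mult.assoc)

lemma qf_ev: "qf S M a = (\<Sum>x\<in>S. a x * ev S M a x)"
  using bf_ev qf_bf by metis

lemma bf_sym: assumes "symon S M" shows "bf S M a b = bf S M b a"
proof -
  have "bf S M a b = (\<Sum>y\<in>S. \<Sum>x\<in>S. a x * b y * M x y)" unfolding bf_def by (rule sum.swap)
  also have "\<dots> = bf S M b a" unfolding bf_def
    by (intro sum.cong refl) (use assms in \<open>auto simp: symon_def mult.commute\<close>)
  finally show ?thesis .
qed

lemma qf_expand: assumes "symon S M"
  shows "qf S M (\<lambda>x. a x + t * b x) = qf S M a + 2 * t * bf S M a b + t^2 * qf S M b"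
proof -
  have "qf S M (\<lambda>x. a x + t * b x) = qf S M a + t * bf S M a b + t * bf S M b a + t^2 * qf S M b"
    unfolding qf_def bf_def
    by (simp add: sum.distrib sum_distrib_left algebra_simps power2_eq_square)
  then show ?thesis using bf_sym[OF assms, of a b] by simp
qed

lemma discr:
  fixes \<alpha> \<beta> \<gamma> :: real
  assumes "\<And>t. 0 \<le> \<alpha> + 2 * t * \<beta> + t^2 * \<gamma>" "\<gamma> \<ge> 0"
  shows "\<beta>^2 \<le> \<alpha> * \<gamma>"
proof -
  have a0: "\<alpha> \<ge> 0" using assms(1)[of 0] by simp
  consider "\<gamma> > 0" | "\<gamma> = 0" using assms(2) by linarith
  then show ?thesis
  proof cases
    case 1
    have "0 \<le> \<alpha> + 2 * (-\<beta>/\<gamma>) * \<beta> + (-\<beta>/\<gamma>)^2 * \<gamma>" by (rule assms)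
    also have "\<dots> = \<alpha> - \<beta>^2/\<gamma>" using 1 by (simp add: power2_eq_square field_simps)
    finally have "\<beta>^2/\<gamma> \<le> \<alpha>" by simp
    then show ?thesis using 1 by (simp add: field_simps)
  next
    case 2
    show ?thesis
    proof (rule ccontr)
      assume "\<not> ?thesis"
      then have "\<beta> \<noteq> 0" using 2 by simp
      have "0 \<le> \<alpha> + 2 * (-(\<alpha>+1)/(2*\<beta>)) * \<beta> + (-(\<alpha>+1)/(2*\<beta>))^2 * \<gamma>" by (rule assms)
      also have "\<dots> = -1" using 2 \<open>\<beta> \<noteq> 0\<close> by (simp add: field_simps)
      finally show False by simp
    qed
  qed
qed

lemma cauchy_schwarz:
  assumes "symon S M" "psdon S M"
  shows "(bf S M a b)^2 \<le> qf S M a * qf S M b"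
proof (rule discr)
  fix t show "0 \<le> qf S M a + 2 * t * bf S M a b + t^2 * qf S M b"
    using qf_expand[OF assms(1)] assms(2) unfolding psdon_def by metis
  show "qf S M b \<ge> 0" using assms(2) unfolding psdon_def by blast
qed

lemma qf_nonneg: "psdon S M \<Longrightarrow> qf S M a \<ge> 0" unfolding psdon_def by blast

definition delta :: "'a \<Rightarrow> 'a \<Rightarrow> real" where "delta x = (\<lambda>z. if z = x then 1 else 0)"

lemma delta_mult: "delta x z * t = (if z = x then t else 0)" "t * delta x z = (if z = x then t else 0)"
  by (auto simp: delta_def)

lemma bf_delta: assumes "finite S" "x \<in> S" shows "bf S M (delta x) a = ev S M a x"
  using assms by (simp add: bf_ev delta_mult)

lemma qf_delta: assumes "finite S" "x \<in> S" shows "qf S M (delta x) = M x x"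
  using assms by (simp add: qf_bf bf_delta ev_def delta_mult)

lemma ev_bound:
  assumes "symon S M" "psdon S M" "finite S" "x \<in> S"
  shows "(ev S M a x)^2 \<le> M x x * qf S M a"
  using cauchy_schwarz[OF assms(1,2), of "delta x" a] bf_delta[OF assms(3,4)] qf_delta[OF assms(3,4)]
  by simp

lemma bf_add_right: "bf S M a (\<lambda>x. b x + c x) = bf S M a b + bf S M a c"
  unfolding bf_def by (simp add: sum.distrib algebra_simps)

lemma qf_add: assumes "symon S M"
  shows "qf S M (\<lambda>x. a x + b x) = qf S M a + 2 * bf S M a b + qf S M b"
  using qf_expand[OF assms, of a 1 b] by simp

lemma triangle:
  assumes "symon S M" "psdon S M"
  shows "sqrt (qf S M (\<lambda>x. a x + b x)) \<le> sqrt (qf S M a) + sqrt (qf S M b)"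
proof -
  have A: "qf S M a \<ge> 0" "qf S M b \<ge> 0" using assms(2) qf_nonneg by auto
  have "bf S M a b \<le> sqrt (qf S M a) * sqrt (qf S M b)"
  proof -
    have "(bf S M a b)^2 \<le> (sqrt (qf S M a) * sqrt (qf S M b))^2"
      using cauchy_schwarz[OF assms] A by (simp add: power_mult_distrib)
    then have "\<bar>bf S M a b\<bar> \<le> sqrt (qf S M a) * sqrt (qf S M b)"
      using A by (metis abs_le_square_iff abs_of_nonneg real_sqrt_ge_zero mult_nonneg_nonneg)
    then show ?thesis by simp
  qed
  then have "qf S M (\<lambda>x. a x + b x) \<le> (sqrt (qf S M a) + sqrt (qf S M b))^2"
    using qf_add[OF assms(1)] A by (simp add: power2_sum)
  then show ?thesis using A by (metis real_sqrt_le_iff real_sqrt_unique add_nonneg_nonneg real_sqrt_ge_zero)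
qed

lemma qf_diff_sym: "qf S M (\<lambda>x. a x - b x) = qf S M (\<lambda>x. b x - a x)"
  unfolding qf_def by (intro sum.cong refl) (simp add: algebra_simps)

lemma qf_mono_neutral:
  assumes "finite T" "S \<subseteq> T" "\<And>x. x \<in> T - S \<Longrightarrow> a x = 0"
  shows "qf T M a = qf S M a"
proof -
  have "qf T M a = (\<Sum>x\<in>T. \<Sum>y\<in>S. a x * a y * M x y)" unfolding qf_def
    by (intro sum.cong refl sum.mono_neutral_right) (use assms finite_subset in auto)
  also have "\<dots> = qf S M a" unfolding qf_def
    by (rule sum.mono_neutral_right) (use assms finite_subset in auto)
  finally show ?thesis .
qed

lemma ev_mono_neutral:
  assumes "finite T" "S \<subseteq> T" "\<And>x. x \<in> T - S \<Longrightarrow> a x = 0"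
  shows "ev T M a y = ev S M a y"
  unfolding ev_def by (rule sum.mono_neutral_right) (use assms in auto)

lemma bf_mono_neutral:
  assumes "finite T" "S \<subseteq> T" "\<And>x. x \<in> T - S \<Longrightarrow> a x = 0" "\<And>x. x \<in> T - S \<Longrightarrow> b x = 0"
  shows "bf T M a b = bf S M a b"
proof -
  have "bf T M a b = (\<Sum>x\<in>T. \<Sum>y\<in>S. a x * b y * M x y)" unfolding bf_def
    by (intro sum.cong refl sum.mono_neutral_right) (use assms finite_subset in auto)
  also have "\<dots> = bf S M a b" unfolding bf_def
    by (rule sum.mono_neutral_right) (use assms finite_subset in auto)
  finally show ?thesis .
qed

abbreviation supp :: "('a \<Rightarrow> real) \<Rightarrow> 'a set" where "supp c \<equiv> {y. c y \<noteq> 0}"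

lemma comb_eval_ev: assumes "finite S" "supp c \<subseteq> S" shows "comb_eval M c x = ev S M c x"
  unfolding comb_eval_def ev_def by (rule sum.mono_neutral_left) (use assms in auto)

lemma comb_sqnorm_qf: assumes "finite S" "supp c \<subseteq> S" shows "comb_sqnorm M c = qf S M c"
proof -
  have f: "finite (supp c)" using assms finite_subset by blast
  have "qf S M c = qf (supp c) M c" by (rule qf_mono_neutral) (use assms in auto)
  then show ?thesis unfolding comb_sqnorm_def qf_def by simp
qed


lemma dist_qf:
  assumes "symon S M" "psdon S M"
  shows "\<bar>sqrt (qf S M a) - sqrt (qf S M b)\<bar> \<le> sqrt (qf S M (\<lambda>x. a x - b x))"
proof -
  have 1: "sqrt (qf S M a) \<le> sqrt (qf S M (\<lambda>x. a x - b x)) + sqrt (qf S M b)"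
    using triangle[OF assms, of "\<lambda>x. a x - b x" b] by simp
  have 2: "sqrt (qf S M b) \<le> sqrt (qf S M (\<lambda>x. b x - a x)) + sqrt (qf S M a)"
    using triangle[OF assms, of "\<lambda>x. b x - a x" a] by simp
  have 2: "sqrt (qf S M b) \<le> sqrt (qf S M (\<lambda>x. a x - b x)) + sqrt (qf S M a)"
    using 2 qf_diff_sym[of S M a b] by simp
  show ?thesis unfolding abs_le_iff using 1 2 by linarith
qed

lemma rk_sym: "repr_kernel Z M \<Longrightarrow> S \<subseteq> Z \<Longrightarrow> symon S M"
  using repr_kernel_iff symon_subset by blast
lemma rk_psd: "repr_kernel Z M \<Longrightarrow> finite S \<Longrightarrow> S \<subseteq> Z \<Longrightarrow> psdon S M"
  using repr_kernel_iff by blast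

lemma approx_fin:
  assumes "approx_seq M Z f c" shows "finite (supp (c n))" "supp (c n) \<subseteq> Z"
  using assms unfolding approx_seq_def fin_comb_def by auto

lemma approx_norm_conv:
  assumes rk: "repr_kernel Z M" and ap: "approx_seq M Z f c"
  shows "convergent (\<lambda>n. sqrt (comb_sqnorm M (c n)))"
proof -
  have "Cauchy (\<lambda>n. sqrt (comb_sqnorm M (c n)))"
  proof (rule metric_CauchyI)
    fix e :: real assume e: "e > 0"
    then obtain N where N: "\<forall>m\<ge>N. \<forall>n\<ge>N. comb_sqnorm M (\<lambda>y. c m y - c n y) < e^2"
      using ap unfolding approx_seq_def by (meson zero_less_power)
    show "\<exists>N. \<forall>m\<ge>N. \<forall>n\<ge>N. dist (sqrt (comb_sqnorm M (c m))) (sqrt (comb_sqnorm M (c n))) < e"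
    proof (intro exI allI impI)
      fix m n assume mn: "N \<le> m" "N \<le> n"
      define S where "S = supp (c m) \<union> supp (c n)"
      have S: "finite S" "S \<subseteq> Z" using approx_fin[OF ap] unfolding S_def by auto
      have "comb_sqnorm M (c m) = qf S M (c m)" "comb_sqnorm M (c n) = qf S M (c n)"
        "comb_sqnorm M (\<lambda>y. c m y - c n y) = qf S M (\<lambda>y. c m y - c n y)"
        by (rule comb_sqnorm_qf; use S in \<open>auto simp: S_def\<close>)+
      moreover have "sqrt (qf S M (\<lambda>y. c m y - c n y)) < e"
        using N mn e calculation(3) by (metis real_sqrt_less_iff real_sqrt_pow2_iff less_le_not_le
            real_sqrt_abs abs_of_pos)
      ultimately show "dist (sqrt (comb_sqnorm M (c m))) (sqrt (comb_sqnorm M (c n))) < e"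
        using dist_qf[OF rk_sym[OF rk S(2)] rk_psd[OF rk S], of "c m" "c n"]
        by (simp add: dist_real_def)
    qed
  qed
  then show ?thesis by (simp add: Cauchy_convergent_iff)
qed

lemma char_upper:
  assumes rk: "repr_kernel Z M" and ap: "approx_seq M Z f c"
    and lim: "(\<lambda>n. sqrt (comb_sqnorm M (c n))) \<longlonglongrightarrow> r"
    and F: "finite F" "F \<subseteq> Z"
  shows "(\<Sum>x\<in>F. a x * f x)^2 \<le> r^2 * qf F M a"
proof -
  define a' where "a' = (\<lambda>x. if x \<in> F then a x else 0)"
  define s where "s n = (\<Sum>x\<in>F. a x * comb_eval M (c n) x)" for n
  have conv: "s \<longlonglongrightarrow> (\<Sum>x\<in>F. a x * f x)"
    unfolding s_def using ap F unfolding approx_seq_def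
    by (intro tendsto_sum tendsto_mult_left) auto
  have bnd: "(s n)^2 \<le> qf F M a * (sqrt (comb_sqnorm M (c n)))^2" for n
  proof -
    define T where "T = F \<union> supp (c n)"
    have T: "finite T" "T \<subseteq> Z" using approx_fin[OF ap] F unfolding T_def by auto
    have "s n = (\<Sum>x\<in>F. a x * ev T M (c n) x)"
      unfolding s_def by (intro sum.cong refl) (simp add: comb_eval_ev[OF T(1)] T_def)
    also have "\<dots> = (\<Sum>x\<in>T. a' x * ev T M (c n) x)"
      by (rule sum.mono_neutral_cong_left) (use T in \<open>auto simp: a'_def T_def\<close>)
    also have "\<dots> = bf T M a' (c n)" by (simp add: bf_ev)
    finally have sn: "s n = bf T M a' (c n)" .
    have q1: "qf T M a' = qf F M a"
    proof -
      have "qf T M a' = qf F M a'" by (rule qf_mono_neutral) (use T in \<open>auto simp: a'_def T_def\<close>)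
      also have "\<dots> = qf F M a" unfolding qf_def a'_def by (intro sum.cong refl) auto
      finally show ?thesis .
    qed
    have q2: "comb_sqnorm M (c n) = qf T M (c n)" by (rule comb_sqnorm_qf) (use T in \<open>auto simp: T_def\<close>)
    have "qf T M (c n) \<ge> 0" using qf_nonneg rk_psd[OF rk T] by blast
    then show ?thesis using cauchy_schwarz[OF rk_sym[OF rk T(2)] rk_psd[OF rk T], of a' "c n"] sn q1 q2
      by simp
  qed
  have "(\<Sum>x\<in>F. a x * f x)^2 \<le> qf F M a * r^2"
  proof (rule tendsto_le[of sequentially])
    show "(\<lambda>n. qf F M a * (sqrt (comb_sqnorm M (c n)))^2) \<longlonglongrightarrow> qf F M a * r^2"
      by (intro tendsto_intros lim)
    show "(\<lambda>n. (s n)^2) \<longlonglongrightarrow> (\<Sum>x\<in>F. a x * f x)^2" by (intro tendsto_intros conv)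
    show "sequentially \<noteq> bot" by simp
    show "eventually (\<lambda>n. (s n)^2 \<le> qf F M a * (sqrt (comb_sqnorm M (c n)))^2) sequentially"
      using bnd by simp
  qed
  then show ?thesis by (simp add: mult.commute)
qed

lemma lim_nonneg_sqrt: "(\<lambda>n. sqrt (X n)) \<longlonglongrightarrow> r \<Longrightarrow> (\<And>n. X n \<ge> 0) \<Longrightarrow> r \<ge> (0::real)"
  by (rule LIMSEQ_le_const[of "\<lambda>n. sqrt (X n)"]) auto

lemma comb_sqnorm_nonneg:
  assumes rk: "repr_kernel Z M" and ap: "approx_seq M Z f c"
  shows "comb_sqnorm M (c n) \<ge> 0"
  using comb_sqnorm_qf[OF approx_fin(1)[OF ap] order_refl] qf_nonneg rk_psd[OF rk approx_fin[OF ap]]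
  by metis

lemma char_lower:
  assumes rk: "repr_kernel Z M" and ap: "approx_seq M Z f c"
    and lim: "(\<lambda>n. sqrt (comb_sqnorm M (c n))) \<longlonglongrightarrow> r"
    and r': "r' \<ge> 0" and H: "\<And>F a. finite F \<Longrightarrow> F \<subseteq> Z \<Longrightarrow> (\<Sum>x\<in>F. a x * f x)^2 \<le> r'^2 * qf F M a"
  shows "r \<le> r'"
proof (rule field_le_epsilon)
  fix \<epsilon> :: real assume e: "\<epsilon> > 0"
  obtain N where N: "\<forall>m\<ge>N. \<forall>n\<ge>N. comb_sqnorm M (\<lambda>y. c m y - c n y) < \<epsilon>^2"
    using ap e unfolding approx_seq_def by (meson zero_less_power)
  have claim: "sqrt (comb_sqnorm M (c m)) \<le> r' + \<epsilon>" if m: "m \<ge> N" for m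
  proof -
    define F where "F = supp (c m)"
    have F: "finite F" "F \<subseteq> Z" using approx_fin[OF ap] F_def by auto
    define nm where "nm = sqrt (comb_sqnorm M (c m))"
    have nmF: "comb_sqnorm M (c m) = qf F M (c m)" by (rule comb_sqnorm_qf) (use F F_def in auto)
    have nm0: "nm \<ge> 0" unfolding nm_def using comb_sqnorm_nonneg[OF rk ap] by simp
    define P where "P = (\<Sum>x\<in>F. c m x * f x)"
    define t where "t n = (\<Sum>x\<in>F. c m x * comb_eval M (c n) x)" for n
    have conv: "t \<longlonglongrightarrow> P"
      unfolding t_def P_def using ap F unfolding approx_seq_def
      by (intro tendsto_sum tendsto_mult_left) auto
    have tb: "t n \<ge> nm^2 - nm * \<epsilon>" if n: "n \<ge> N" for n
    proof -
      define T where "T = F \<union> supp (c n)"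
      have T: "finite T" "T \<subseteq> Z" using approx_fin[OF ap] F unfolding T_def by auto
      have sy: "symon T M" and ps: "psdon T M" using rk_sym[OF rk T(2)] rk_psd[OF rk T] .
      have "t n = (\<Sum>x\<in>F. c m x * ev T M (c n) x)"
        unfolding t_def by (intro sum.cong refl) (simp add: comb_eval_ev[OF T(1)] T_def)
      also have "\<dots> = (\<Sum>x\<in>T. c m x * ev T M (c n) x)"
        by (rule sum.mono_neutral_cong_left) (use T in \<open>auto simp: F_def T_def\<close>)
      also have "\<dots> = bf T M (c m) (c n)" by (simp add: bf_ev)
      finally have tn: "t n = bf T M (c m) (c n)" .
      have split: "bf T M (c m) (c n) = bf T M (c m) (c m) + bf T M (c m) (\<lambda>y. c n y - c m y)"
        using bf_add_right[of T M "c m" "c m" "\<lambda>y. c n y - c m y"] by simp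
      have q1: "bf T M (c m) (c m) = nm^2"
      proof -
        have "qf T M (c m) = qf F M (c m)" by (rule qf_mono_neutral) (use T in \<open>auto simp: F_def T_def\<close>)
        then show ?thesis using nmF qf_nonneg[OF ps, of "c m"] by (simp add: nm_def qf_bf)
      qed
      have q2: "qf T M (\<lambda>y. c n y - c m y) < \<epsilon>^2"
      proof -
        have "comb_sqnorm M (\<lambda>y. c n y - c m y) = qf T M (\<lambda>y. c n y - c m y)"
          by (rule comb_sqnorm_qf) (use T in \<open>auto simp: F_def T_def\<close>)
        then show ?thesis using N n m by metis
      qed
      have "(bf T M (c m) (\<lambda>y. c n y - c m y))^2 \<le> nm^2 * \<epsilon>^2"
      proof -
        have "(bf T M (c m) (\<lambda>y. c n y - c m y))^2 \<le> qf T M (c m) * qf T M (\<lambda>y. c n y - c m y)"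
          by (rule cauchy_schwarz[OF sy ps])
        also have "\<dots> \<le> nm^2 * \<epsilon>^2"
          using q1 q2 qf_nonneg[OF ps] by (intro mult_mono) (auto simp: qf_bf)
        finally show ?thesis .
      qed
      then have "\<bar>bf T M (c m) (\<lambda>y. c n y - c m y)\<bar> \<le> nm * \<epsilon>"
        using nm0 e by (metis abs_le_square_iff abs_of_nonneg mult_nonneg_nonneg less_imp_le power_mult_distrib)
      then show ?thesis using tn split q1 by linarith
    qed
    have Pge: "P \<ge> nm^2 - nm * \<epsilon>"
      by (rule LIMSEQ_le_const[OF conv]) (use tb in auto)
    have "P^2 \<le> r'^2 * nm^2" using H[OF F, of "c m"] nmF P_def nm_def
      by (metis F(1) F(2) H qf_nonneg rk rk_psd real_sqrt_pow2)
    then have "\<bar>P\<bar> \<le> r' * nm" using r' nm0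
      by (metis abs_le_square_iff abs_of_nonneg mult_nonneg_nonneg power_mult_distrib)
    then have "nm^2 - nm * \<epsilon> \<le> r' * nm" using Pge by linarith
    then have "nm * (nm - \<epsilon> - r') \<le> 0" by (simp add: algebra_simps power2_eq_square)
    then have "nm \<le> r' + \<epsilon>" using nm0 e r'
      by (smt (verit) mult_pos_pos)
    then show ?thesis by (simp add: nm_def)
  qed
  show "r \<le> r' + \<epsilon>"
    by (rule LIMSEQ_le_const2[OF lim]) (use claim in auto)
qed

lemma rkhs_norm_eq:
  assumes rk: "repr_kernel Z M" and ap: "approx_seq M Z f c"
    and lim: "(\<lambda>n. sqrt (comb_sqnorm M (c n))) \<longlonglongrightarrow> r"
  shows "rkhs_norm M Z f = r"
  unfolding rkhs_norm_def
proof (rule the_equality)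
  show "\<exists>c. approx_seq M Z f c \<and> (\<lambda>n. sqrt (comb_sqnorm M (c n))) \<longlonglongrightarrow> r" using ap lim by blast
next
  fix r2 assume "\<exists>c. approx_seq M Z f c \<and> (\<lambda>n. sqrt (comb_sqnorm M (c n))) \<longlonglongrightarrow> r2"
  then obtain c2 where ap2: "approx_seq M Z f c2" and lim2: "(\<lambda>n. sqrt (comb_sqnorm M (c2 n))) \<longlonglongrightarrow> r2"
    by blast
  have "r \<le> r2" by (rule char_lower[OF rk ap lim lim_nonneg_sqrt[OF lim2 comb_sqnorm_nonneg[OF rk ap2]] char_upper[OF rk ap2 lim2]])
  moreover have "r2 \<le> r" by (rule char_lower[OF rk ap2 lim2 lim_nonneg_sqrt[OF lim comb_sqnorm_nonneg[OF rk ap]] char_upper[OF rk ap lim]])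
  ultimately show "r2 = r" by simp
qed

lemma rkhs_bound:
  assumes rk: "repr_kernel Z M" and f: "f \<in> rkhs M Z" and F: "finite F" "F \<subseteq> Z"
  shows "(\<Sum>x\<in>F. a x * f x)^2 \<le> (rkhs_norm M Z f)^2 * qf F M a"
proof -
  obtain c where ap: "approx_seq M Z f c" using f unfolding rkhs_def by blast
  obtain r where lim: "(\<lambda>n. sqrt (comb_sqnorm M (c n))) \<longlonglongrightarrow> r"
    using approx_norm_conv[OF rk ap] convergent_def by blast
  show ?thesis using char_upper[OF rk ap lim F] rkhs_norm_eq[OF rk ap lim] by simp
qed

lemma rkhs_norm_nonneg:
  assumes rk: "repr_kernel Z M" and f: "f \<in> rkhs M Z"
  shows "rkhs_norm M Z f \<ge> 0"
proof -
  obtain c where ap: "approx_seq M Z f c" using f unfolding rkhs_def by blast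
  obtain r where lim: "(\<lambda>n. sqrt (comb_sqnorm M (c n))) \<longlonglongrightarrow> r"
    using approx_norm_conv[OF rk ap] convergent_def by blast
  show ?thesis using rkhs_norm_eq[OF rk ap lim] lim_nonneg_sqrt[OF lim comb_sqnorm_nonneg[OF rk ap]] by simp
qed


lemma ev_lin: "ev S M (\<lambda>z. a z + t * b z) x = ev S M a x + t * ev S M b x"
  unfolding ev_def by (simp add: sum.distrib sum_distrib_left algebra_simps)

lemma interp:
  assumes "finite F" "F \<subseteq> Z" "repr_kernel Z M"
    and "\<forall>a. (\<Sum>x\<in>F. a x * g x)^2 \<le> R * qf F M a"
  shows "\<exists>b. (\<forall>x. x \<notin> F \<longrightarrow> b x = 0) \<and> (\<forall>x\<in>F. ev F M b x = g x)"
  using assms(1,2,4)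
proof (induction F arbitrary: g R rule: finite_induct)
  case empty
  show ?case by (rule exI[of _ "\<lambda>_. 0"]) simp
next
  case (insert x F)
  define G where "G = insert x F"
  have G: "finite G" "G \<subseteq> Z" using insert unfolding G_def by auto
  have sy: "symon G M" and ps: "psdon G M" using assms(3) G repr_kernel_iff symon_subset by blast+
  have FZ: "F \<subseteq> Z" using insert by auto
  have restrict: "(\<Sum>z\<in>G. a' z * h z) = (\<Sum>z\<in>F. a z * h z)" "qf G M a' = qf F M a"
    if "a' = (\<lambda>z. if z = x then 0 else a z)" for a a' h :: "'a \<Rightarrow> real"
  proof -
    show "(\<Sum>z\<in>G. a' z * h z) = (\<Sum>z\<in>F. a z * h z)"
      using insert(1,2) unfolding G_def that by (auto intro!: sum.cong)
    have "qf G M a' = qf F M a'" unfolding G_def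
      by (rule qf_mono_neutral) (use insert that in auto)
    also have "\<dots> = qf F M a" unfolding qf_def that using insert(2) by (auto intro!: sum.cong)
    finally show "qf G M a' = qf F M a" .
  qed
  have "\<forall>a. (\<Sum>z\<in>F. a z * g z)^2 \<le> R * qf F M a"
  proof
    fix a :: "'a \<Rightarrow> real"
    define a' where "a' = (\<lambda>z. if z = x then 0 else a z)"
    show "(\<Sum>z\<in>F. a z * g z)^2 \<le> R * qf F M a"
      using insert(5)[rule_format, of a', folded G_def] restrict[OF a'_def] by simp
  qed
  from insert(3)[OF FZ this] obtain bF where bF: "\<forall>z. z \<notin> F \<longrightarrow> bF z = 0" "\<forall>z\<in>F. ev F M bF z = g z"
    by blast
  have evd: "ev G M (delta x) z = M z x" for z
    unfolding ev_def using G(1) by (simp add: delta_mult G_def)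
  have "\<forall>a. (\<Sum>z\<in>F. a z * M z x)^2 \<le> M x x * qf F M a"
  proof
    fix a :: "'a \<Rightarrow> real"
    define a' where "a' = (\<lambda>z. if z = x then 0 else a z)"
    have "bf G M a' (delta x) = (\<Sum>z\<in>F. a z * M z x)"
      using restrict(1)[OF a'_def, of "\<lambda>z. M z x"] by (simp add: bf_ev evd)
    moreover have "qf G M (delta x) = M x x" using qf_delta[OF G(1), of x M] by (simp add: G_def)
    ultimately show "(\<Sum>z\<in>F. a z * M z x)^2 \<le> M x x * qf F M a"
      using cauchy_schwarz[OF sy ps, of a' "delta x"] restrict(2)[OF a'_def] by (simp add: mult.commute)
  qed
  from insert(3)[OF FZ this] obtain p where p: "\<forall>z. z \<notin> F \<longrightarrow> p z = 0" "\<forall>z\<in>F. ev F M p z = M z x"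
    by blast
  define h where "h = (\<lambda>z. if z = x then 1 else - p z)"
  have evh: "ev G M h z = M z x - ev F M p z" for z
  proof -
    have "ev G M h z = h x * M z x + (\<Sum>y\<in>F. h y * M z y)"
      unfolding ev_def G_def using insert(1,2) by simp
    also have "(\<Sum>y\<in>F. h y * M z y) = - ev F M p z"
      unfolding ev_def h_def sum_negf[symmetric] using insert(2) by (intro sum.cong) auto
    finally show ?thesis by (simp add: h_def)
  qed
  have hF: "(\<Sum>z\<in>F. h z * q z) = - (\<Sum>z\<in>F. p z * q z)" for q
    unfolding h_def sum_negf[symmetric] using insert(2) by (intro sum.cong) auto
  have hG: "(\<Sum>z\<in>G. h z * q z) = q x - (\<Sum>z\<in>F. p z * q z)" for q
    unfolding G_def using insert(1,2) hF[of q] by (simp add: h_def)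
  have evh0: "ev G M h z = 0" if "z \<in> F" for z using evh p(2) that by simp
  define hx where "hx = ev G M h x"
  have qfh: "qf G M h = hx"
  proof -
    have "qf G M h = h x * ev G M h x + (\<Sum>z\<in>F. h z * ev G M h z)"
      unfolding qf_ev G_def using insert(1,2) by simp
    also have "(\<Sum>z\<in>F. h z * ev G M h z) = 0" using evh0 by simp
    finally show ?thesis by (simp add: h_def hx_def)
  qed
  have hx0: "hx \<ge> 0" using qfh qf_nonneg[OF ps] by metis
  have evbF: "ev G M bF z = ev F M bF z" for z
    unfolding G_def by (rule ev_mono_neutral) (use insert bF in auto)
  have hzero: "h z = 0" if "z \<notin> G" for z using that p(1) unfolding h_def G_def by auto
  show ?case
  proof (cases "hx > 0")
    case True
    define t where "t = (g x - ev F M bF x) / hx"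
    define b where "b = (\<lambda>z. bF z + t * h z)"
    show ?thesis
    proof (intro exI[of _ b] conjI allI ballI impI)
      fix z assume "z \<notin> insert x F"
      then show "b z = 0" using bF(1) hzero unfolding b_def G_def by auto
    next
      fix z assume z: "z \<in> insert x F"
      have "ev (insert x F) M b z = ev G M bF z + t * ev G M h z" unfolding b_def G_def by (rule ev_lin)
      then show "ev (insert x F) M b z = g z"
        using z evbF evh0 bF(2) True unfolding t_def hx_def by (auto simp: G_def)
    qed
  next
    case False
    then have hx00: "hx = 0" using hx0 by simp
    have "(\<Sum>z\<in>G. h z * g z)^2 \<le> R * qf G M h" using insert(5) G_def by blast
    then have "(\<Sum>z\<in>G. h z * g z) = 0" using qfh hx00 by simp
    then have gx: "g x = (\<Sum>z\<in>F. p z * g z)"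
      using hG[of g] by simp
    have "bf G M h bF = bf G M bF h" by (rule bf_sym[OF sy])
    also have "\<dots> = (\<Sum>z\<in>G. bF z * ev G M h z)" by (rule bf_ev)
    also have "\<dots> = 0"
    proof (rule sum.neutral, rule ballI)
      fix z assume "z \<in> G"
      then show "bF z * ev G M h z = 0" using bF(1) evh0 unfolding G_def by (cases "z \<in> F") auto
    qed
    finally have "(\<Sum>z\<in>G. h z * ev G M bF z) = 0" by (simp add: bf_ev)
    then have "ev G M bF x = (\<Sum>z\<in>F. p z * ev G M bF z)"
      using hG[of "ev G M bF"] by simp
    also have "\<dots> = (\<Sum>z\<in>F. p z * g z)" using evbF bF(2) by simp
    finally have "ev G M bF x = g x" using gx by simp
    show ?thesis
    proof (intro exI[of _ bF] conjI allI ballI impI)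
      fix z assume "z \<notin> insert x F" then show "bF z = 0" using bF(1) by auto
    next
      fix z assume z: "z \<in> insert x F"
      then show "ev (insert x F) M bF z = g z"
        using \<open>ev G M bF x = g x\<close> evbF bF(2) unfolding G_def by auto
    qed
  qed
qed


lemma supp_diff: "supp (\<lambda>y. a y - b y) \<subseteq> supp a \<union> supp b" by auto

lemma rkhs_suff:
  assumes rk: "repr_kernel Z M" and r: "r \<ge> 0"
    and H: "\<And>F a. finite F \<Longrightarrow> F \<subseteq> Z \<Longrightarrow> (\<Sum>x\<in>F. a x * f x)^2 \<le> r^2 * qf F M a"
  shows "f \<in> rkhs M Z \<and> rkhs_norm M Z f \<le> r"
proof -
  define isint where "isint F b \<longleftrightarrow> (\<forall>x. x \<notin> F \<longrightarrow> b x = 0) \<and> (\<forall>x\<in>F. ev F M b x = f x)" for F b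
  define ib where "ib F = (SOME b. isint F b)" for F
  define N where "N F = qf F M (ib F)" for F
  define FS where "FS = {F. finite F \<and> F \<subseteq> Z}"
  have ib: "isint F (ib F)" if "F \<in> FS" for F
  proof -
    have "\<exists>b. isint F b" unfolding isint_def
      by (rule interp[where Z=Z and R="r^2"]) (use that H rk in \<open>auto simp: FS_def\<close>)
    then show ?thesis unfolding ib_def by (rule someI_ex)
  qed
  have psdF: "psdon F M" "symon F M" if "F \<in> FS" for F using that rk_psd[OF rk] rk_sym[OF rk] by (auto simp: FS_def)
  have Nval: "qf F M b = (\<Sum>x\<in>F. b x * f x)" if "isint F b" for F b
    unfolding qf_ev using that unfolding isint_def by simp
  have Nle: "N F \<le> r^2" if F: "F \<in> FS" for F
  proof -
    define s where "s = (\<Sum>x\<in>F. ib F x * f x)"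
    have s: "N F = s" unfolding N_def s_def using Nval ib[OF F] by blast
    have "s^2 \<le> r^2 * s" using H[of F "ib F"] F s unfolding s_def by (auto simp: FS_def N_def)
    moreover have "s \<ge> 0" using s qf_nonneg psdF[OF F] N_def by metis
    ultimately show ?thesis using s r
      by (cases "s = 0") (auto simp: power2_eq_square)
  qed
  have diff: "qf G M (\<lambda>x. ib G x - ib F x) = N G - N F" if FG: "F \<subseteq> G" "G \<in> FS" for F G
  proof -
    have F: "F \<in> FS" using FG finite_subset by (auto simp: FS_def)
    note iF = ib[OF F] and iG = ib[OF FG(2)]
    have fG: "finite G" using FG by (auto simp: FS_def)
    have e1: "qf G M (\<lambda>x. ib G x - ib F x) = qf G M (ib G) + 2 * (-1) * bf G M (ib G) (ib F) + (-1)^2 * qf G M (ib F)"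
      using qf_expand[OF psdF(2)[OF FG(2)], of "ib G" "-1" "ib F"] by simp
    have "bf G M (ib G) (ib F) = bf G M (ib F) (ib G)" by (rule bf_sym[OF psdF(2)[OF FG(2)]])
    also have "\<dots> = (\<Sum>x\<in>G. ib F x * ev G M (ib G) x)" by (rule bf_ev)
    also have "\<dots> = (\<Sum>x\<in>F. ib F x * ev G M (ib G) x)"
      by (rule sum.mono_neutral_right) (use fG FG iF in \<open>auto simp: isint_def\<close>)
    also have "\<dots> = (\<Sum>x\<in>F. ib F x * f x)" using iG FG unfolding isint_def by (auto intro!: sum.cong)
    also have "\<dots> = N F" using Nval[OF iF] N_def by simp
    finally have e2: "bf G M (ib G) (ib F) = N F" .
    have e3: "qf G M (ib F) = N F" unfolding N_def
      by (rule qf_mono_neutral) (use fG FG iF in \<open>auto simp: isint_def\<close>)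
    show ?thesis using e1 e2 e3 by (simp add: N_def)
  qed
  have Nmono: "N F \<le> N G" if "F \<subseteq> G" "G \<in> FS" for F G
    using diff[OF that] qf_nonneg psdF(1)[OF that(2)] by (metis diff_ge_0_iff_ge)
  have ne: "FS \<noteq> {}" unfolding FS_def by auto
  have bdd: "bdd_above (N ` FS)" using Nle by (auto intro!: bdd_aboveI)
  define S where "S = (SUP F\<in>FS. N F)"
  have NS: "N F \<le> S" if "F \<in> FS" for F unfolding S_def using bdd that by (rule cSUP_upper2) simp
  have Sr: "S \<le> r^2" unfolding S_def using ne Nle by (rule cSUP_least)
  have "\<forall>n. \<exists>F. F \<in> FS \<and> S - inverse (real (Suc n)) < N F"
  proof
    fix n
    have "S - inverse (real (Suc n)) < S" by simp
    then show "\<exists>F. F \<in> FS \<and> S - inverse (real (Suc n)) < N F"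
      unfolding S_def using less_cSUP_iff[OF ne bdd] by blast
  qed
  then obtain Fs where Fs: "\<And>n. Fs n \<in> FS" "\<And>n. S - inverse (real (Suc n)) < N (Fs n)"
    by metis
  define G where "G n = (\<Union>i\<le>n. Fs i)" for n
  have GFS: "G n \<in> FS" for n using Fs(1) unfolding G_def FS_def by auto
  have Gmono: "m \<le> n \<Longrightarrow> G m \<subseteq> G n" for m n unfolding G_def by (auto intro: order_trans)
  have GN: "S - inverse (real (Suc n)) < N (G n)" for n
    using Fs(2)[of n] Nmono[of "Fs n" "G n"] GFS unfolding G_def by fastforce
  define c where "c n = ib (G n)" for n
  have csupp: "supp (c n) \<subseteq> G n" for n using ib[OF GFS] unfolding c_def isint_def by auto
  have Gfin: "finite (G n)" "G n \<subseteq> Z" for n using GFS unfolding FS_def by auto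
  have cnorm: "comb_sqnorm M (c n) = N (G n)" for n
    unfolding N_def c_def using comb_sqnorm_qf[OF Gfin(1) csupp[unfolded c_def]] by simp
  have cdiff: "comb_sqnorm M (\<lambda>y. c m y - c n y) < inverse (real (Suc n))" if "n \<le> m" for m n
  proof -
    have "comb_sqnorm M (\<lambda>y. c m y - c n y) = qf (G m) M (\<lambda>y. c m y - c n y)"
      by (rule comb_sqnorm_qf[OF Gfin(1)]) (use supp_diff[of "c m" "c n"] csupp[of m] csupp[of n] Gmono[OF that] in blast)
    also have "\<dots> = N (G m) - N (G n)" unfolding c_def by (rule diff[OF Gmono[OF that] GFS])
    also have "\<dots> < inverse (real (Suc n))" using NS[OF GFS, of m] GN[of n] by simp
    finally show ?thesis .
  qed
  have cauchy: "\<forall>e>0. \<exists>K. \<forall>m\<ge>K. \<forall>n\<ge>K. comb_sqnorm M (\<lambda>y. c m y - c n y) < e"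
  proof (intro allI impI)
    fix e :: real assume e: "e > 0"
    obtain K where K: "inverse (real (Suc K)) < e" using reals_Archimedean e by blast
    show "\<exists>K. \<forall>m\<ge>K. \<forall>n\<ge>K. comb_sqnorm M (\<lambda>y. c m y - c n y) < e"
    proof (intro exI allI impI)
      fix m n assume mn: "K \<le> m" "K \<le> n"
      have iK: "inverse (real (Suc j)) \<le> inverse (real (Suc K))" if "K \<le> j" for j
        using that by (simp add: le_imp_inverse_le)
      show "comb_sqnorm M (\<lambda>y. c m y - c n y) < e"
      proof (cases "n \<le> m")
        case True then show ?thesis using cdiff[OF True] iK[OF mn(2)] K by linarith
      next
        case False
        then have nm: "m \<le> n" by simp
        have "comb_sqnorm M (\<lambda>y. c m y - c n y) = qf (G n) M (\<lambda>y. c m y - c n y)"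
          by (rule comb_sqnorm_qf[OF Gfin(1)]) (use supp_diff[of "c m" "c n"] supp_diff[of "c n" "c m"] csupp[of m] csupp[of n] Gmono[OF nm] in blast)
        also have "\<dots> = qf (G n) M (\<lambda>y. c n y - c m y)" by (rule qf_diff_sym)
        also have "\<dots> = comb_sqnorm M (\<lambda>y. c n y - c m y)"
          by (rule comb_sqnorm_qf[OF Gfin(1), symmetric]) (use supp_diff[of "c m" "c n"] supp_diff[of "c n" "c m"] csupp[of m] csupp[of n] Gmono[OF nm] in blast)
        finally show ?thesis using cdiff[OF nm] iK[OF mn(1)] K by linarith
      qed
    qed
  qed
  have pointwise: "(\<lambda>n. comb_eval M (c n) x) \<longlonglongrightarrow> f x" if x: "x \<in> Z" for x
  proof -
    have Mxx: "M x x \<ge> 0" using qf_nonneg[OF rk_psd[OF rk, of "{x}"], of "delta x"] qf_delta[of "{x}" x M] x by simp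
    have bnd: "norm (comb_eval M (c n) x - f x) \<le> sqrt (M x x * inverse (real (Suc n)))" for n
    proof -
      define G' where "G' = insert x (G n)"
      have G': "G' \<in> FS" using GFS[of n] x unfolding G'_def FS_def by auto
      have GG': "G n \<subseteq> G'" unfolding G'_def by auto
      note iG' = ib[OF G']
      have fG': "finite G'" using G' by (auto simp: FS_def)
      have e1: "comb_eval M (c n) x = ev G' M (c n) x"
        by (rule comb_eval_ev[OF fG']) (use csupp GG' in blast)
      have e2: "ev G' M (ib G') x = f x" using iG' unfolding isint_def G'_def by simp
      have "ev G' M (\<lambda>z. ib G' z + (-1) * c n z) x = ev G' M (ib G') x + (-1) * ev G' M (c n) x"
        by (rule ev_lin)
      then have e3: "ev G' M (\<lambda>z. ib G' z - c n z) x = f x - comb_eval M (c n) x" using e1 e2 by simp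
      have "(ev G' M (\<lambda>z. ib G' z - c n z) x)^2 \<le> M x x * qf G' M (\<lambda>z. ib G' z - c n z)"
        by (rule ev_bound[OF psdF(2)[OF G'] psdF(1)[OF G'] fG']) (simp add: G'_def)
      also have "qf G' M (\<lambda>z. ib G' z - c n z) = N G' - N (G n)" unfolding c_def by (rule diff[OF GG' G'])
      also have "\<dots> \<le> inverse (real (Suc n))" using NS[OF G'] GN[of n] by simp
      finally have "(f x - comb_eval M (c n) x)^2 \<le> M x x * inverse (real (Suc n))"
        using e3 Mxx mult_left_mono order_trans by (smt (verit))
      then have "sqrt ((f x - comb_eval M (c n) x)^2) \<le> sqrt (M x x * inverse (real (Suc n)))"
        by (rule real_sqrt_le_mono)
      then have "\<bar>f x - comb_eval M (c n) x\<bar> \<le> sqrt (M x x * inverse (real (Suc n)))"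
        by simp
      then show ?thesis by (simp add: abs_minus_commute)
    qed
    have "(\<lambda>n. sqrt (M x x * inverse (real (Suc n)))) \<longlonglongrightarrow> sqrt (M x x * 0)"
      by (intro tendsto_intros LIMSEQ_inverse_real_of_nat)
    then have t0: "(\<lambda>n. sqrt (M x x * inverse (real (Suc n)))) \<longlonglongrightarrow> 0" by simp
    have "(\<lambda>n. comb_eval M (c n) x - f x) \<longlonglongrightarrow> 0"
      by (rule Lim_null_comparison[OF _ t0]) (use bnd in simp)
    then have "(\<lambda>n. (comb_eval M (c n) x - f x) + f x) \<longlonglongrightarrow> 0 + f x" by (intro tendsto_intros)
    then show ?thesis by simp
  qed
  have ap: "approx_seq M Z f c"
    unfolding approx_seq_def fin_comb_def
  proof (intro conjI allI ballI)
    fix n show "finite (supp (c n))" using csupp[of n] Gfin(1)[of n] finite_subset by blast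
    show "supp (c n) \<subseteq> Z" using csupp[of n] Gfin(2)[of n] by blast
  qed (use cauchy pointwise in auto)
  have NGlim: "(\<lambda>n. N (G n)) \<longlonglongrightarrow> S"
  proof (rule tendsto_sandwich[of "\<lambda>n. S - inverse (real (Suc n))" _ sequentially "\<lambda>n. S"])
    show "eventually (\<lambda>n. S - inverse (real (Suc n)) \<le> N (G n)) sequentially"
      by (rule always_eventually) (use GN less_imp_le in blast)
    show "eventually (\<lambda>n. N (G n) \<le> S) sequentially"
      by (rule always_eventually) (use NS[OF GFS] in blast)
    have "(\<lambda>n. S - inverse (real (Suc n))) \<longlonglongrightarrow> S - 0" by (intro tendsto_intros LIMSEQ_inverse_real_of_nat)
    then show "(\<lambda>n. S - inverse (real (Suc n))) \<longlonglongrightarrow> S" by simp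
  qed simp
  have lim: "(\<lambda>n. sqrt (comb_sqnorm M (c n))) \<longlonglongrightarrow> sqrt S"
    unfolding cnorm by (intro tendsto_intros NGlim)
  have "rkhs_norm M Z f = sqrt S" by (rule rkhs_norm_eq[OF rk ap lim])
  moreover have "sqrt S \<le> sqrt (r^2)" using Sr by (rule real_sqrt_le_mono)
  then have "sqrt S \<le> r" using r by simp
  ultimately show ?thesis using ap unfolding rkhs_def by auto
qed


lemma qf_gram:
  fixes n :: nat
  assumes "\<forall>x\<in>F. \<forall>y\<in>F. M x y = (\<Sum>i<n. v i x * v i y)"
  shows "qf F M a = (\<Sum>i<n. (\<Sum>x\<in>F. a x * v i x)^2)"
proof -
  have "qf F M a = (\<Sum>x\<in>F. \<Sum>y\<in>F. \<Sum>i<n. (a x * v i x) * (a y * v i y))"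
    unfolding qf_def using assms by (intro sum.cong refl) (simp add: sum_distrib_left algebra_simps)
  also have "\<dots> = (\<Sum>i<n. \<Sum>x\<in>F. \<Sum>y\<in>F. (a x * v i x) * (a y * v i y))"
    by (simp add: sum.swap[of _ F "{..<n}"] sum.swap[of _ F "{..<n}"])
  also have "\<dots> = (\<Sum>i<n. (\<Sum>x\<in>F. a x * v i x)^2)"
    by (simp add: power2_eq_square sum_product)
  finally show ?thesis .
qed

lemma qf_restrict:
  assumes "finite F" "x \<notin> F"
  shows "qf (insert x F) M (\<lambda>z. if z = x then 0 else a z) = qf F M a"
proof -
  have "qf (insert x F) M (\<lambda>z. if z = x then 0 else a z) = qf F M (\<lambda>z. if z = x then 0 else a z)"
    by (rule qf_mono_neutral) (use assms in auto)
  also have "\<dots> = qf F M a" unfolding qf_def using assms by (auto intro!: sum.cong)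
  finally show ?thesis .
qed

lemma psdon_insert_sub: assumes "finite F" "x \<notin> F" "psdon (insert x F) M" shows "psdon F M"
  unfolding psdon_def using qf_restrict[OF assms(1,2)] assms(3) unfolding psdon_def by metis

lemma cs_delta:
  assumes "finite F" "x \<notin> F" "psdon (insert x F) M" "symon (insert x F) M"
  shows "(\<Sum>z\<in>F. a z * M z x)^2 \<le> qf F M a * M x x"
proof -
  define a' where "a' = (\<lambda>z. if z = x then 0 else a z)"
  have f: "finite (insert x F)" using assms by simp
  have "bf (insert x F) M a' (delta x) = (\<Sum>z\<in>insert x F. a' z * M z x)"
    unfolding bf_ev ev_def using f by (simp add: delta_mult)
  also have "\<dots> = (\<Sum>z\<in>F. a z * M z x)" using assms(1,2) unfolding a'_def by (auto intro!: sum.cong)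
  finally have e: "bf (insert x F) M a' (delta x) = (\<Sum>z\<in>F. a z * M z x)" .
  show ?thesis using cauchy_schwarz[OF assms(4,3), of a' "delta x"] e qf_restrict[OF assms(1,2), of M a]
      qf_delta[OF f, of x M] unfolding a'_def by simp
qed

lemma psd_decomp:
  assumes "finite F" "symon F M" "psdon F M"
  shows "\<exists>(n::nat) v. \<forall>x\<in>F. \<forall>y\<in>F. M x y = (\<Sum>i<n. v i x * v i y)"
  using assms
proof (induction F arbitrary: M rule: finite_induct)
  case empty
  then show ?case by auto
next
  case (insert x F)
  have symF: "symon F M" using symon_subset[OF insert(4)] by blast
  have psdF: "psdon F M" by (rule psdon_insert_sub[OF insert(1,2,5)])
  have Mxx: "M x x \<ge> 0" using qf_nonneg[OF insert(5), of "delta x"] qf_delta[of "insert x F" x M] insert(1) by simp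
  have sx: "M x z = M z x" if "z \<in> insert x F" for z using insert(4) that unfolding symon_def by blast
  show ?case
  proof (cases "M x x > 0")
    case True
    define M' where "M' = (\<lambda>y z. M y z - M y x * M x z / M x x)"
    have "symon F M'" unfolding symon_def M'_def
    proof (intro ballI)
      fix y z assume y: "y \<in> F" and z: "z \<in> F"
      have 1: "M y z = M z y" using symF y z unfolding symon_def by blast
      have 2: "M x z = M z x" "M x y = M y x" using sx y z by blast+
      show "M y z - M y x * M x z / M x x = M z y - M z x * M x y / M x x"
        unfolding 1 2 by (simp add: mult.commute)
    qed
    moreover have "psdon F M'" unfolding psdon_def
    proof
      fix a
      have "qf F M' a = qf F M a - (\<Sum>y\<in>F. a y * M y x) * (\<Sum>z\<in>F. a z * M x z) / M x x"
        unfolding qf_def M'_def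
        by (simp add: sum_subtractf right_diff_distrib sum_divide_distrib sum_product algebra_simps)
      also have "(\<Sum>z\<in>F. a z * M x z) = (\<Sum>z\<in>F. a z * M z x)"
      proof (intro sum.cong refl)
        fix z assume "z \<in> F"
        then have "M x z = M z x" using sx by blast
        then show "a z * M x z = a z * M z x" by simp
      qed
      finally have "qf F M' a = qf F M a - (\<Sum>y\<in>F. a y * M y x)^2 / M x x" by (simp add: power2_eq_square)
      moreover have "(\<Sum>y\<in>F. a y * M y x)^2 / M x x \<le> qf F M a"
        using cs_delta[OF insert(1,2,5,4), of a] True by (simp add: divide_le_eq)
      ultimately show "0 \<le> qf F M' a" by simp
    qed
    ultimately obtain n :: nat and v where v: "\<forall>y\<in>F. \<forall>z\<in>F. M' y z = (\<Sum>i<n. v i y * v i z)"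
      using insert(3) by blast
    define w where "w = (\<lambda>y. M y x / sqrt (M x x))"
    define v' where "v' = (\<lambda>i. if i < n then (\<lambda>y. if y = x then 0 else v i y) else w)"
    have ww: "w y * w z = M y x * M z x / M x x" for y z
      unfolding w_def using True by (simp add: field_simps real_sqrt_mult[symmetric])
    show ?thesis
    proof (intro exI[of _ "Suc n"] exI[of _ v'] ballI)
      fix y z assume y: "y \<in> insert x F" and z: "z \<in> insert x F"
      have s: "(\<Sum>i<Suc n. v' i y * v' i z) = (\<Sum>i<n. (if y = x then 0 else v i y) * (if z = x then 0 else v i z)) + w y * w z"
        unfolding v'_def by simp
      consider "y = x" "z = x" | "y = x" "z \<noteq> x" | "y \<noteq> x" "z = x" | "y \<noteq> x" "z \<noteq> x" by blast
      then show "M y z = (\<Sum>i<Suc n. v' i y * v' i z)"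
      proof cases
        case 1 then show ?thesis using s ww True by simp
      next
        case 2 then show ?thesis using s ww True sx[OF z] by simp
      next
        case 3 then show ?thesis using s ww True by simp
      next
        case 4
        then have "y \<in> F" "z \<in> F" using y z by auto
        then have "M' y z = (\<Sum>i<n. v i y * v i z)" using v by blast
        then show ?thesis using s ww 4 sx[OF z] unfolding M'_def by simp
      qed
    qed
  next
    case False
    then have M0: "M x x = 0" using Mxx by simp
    have Mz0: "M z x = 0" if "z \<in> F" for z
    proof -
      have "(\<Sum>u\<in>F. delta z u * M u x)^2 \<le> qf F M (delta z) * M x x" by (rule cs_delta[OF insert(1,2,5,4)])
      then show ?thesis using that insert(1) M0 by (simp add: delta_mult)
    qed
    obtain n :: nat and v where v: "\<forall>y\<in>F. \<forall>z\<in>F. M y z = (\<Sum>i<n. v i y * v i z)"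
      using insert(3)[OF symF psdF] by blast
    define v' where "v' = (\<lambda>i y. if y = x then 0 else v i y)"
    show ?thesis
    proof (intro exI[of _ n] exI[of _ v'] ballI)
      fix y z assume y: "y \<in> insert x F" and z: "z \<in> insert x F"
      show "M y z = (\<Sum>i<n. v' i y * v' i z)"
      proof (cases "y = x")
        case True
        then show ?thesis using z Mz0 M0 sx[OF z] unfolding v'_def by auto
      next
        case False
        then have yF: "y \<in> F" using y by auto
        show ?thesis
        proof (cases "z = x")
          case True then show ?thesis using yF Mz0 False unfolding v'_def by simp
        next
          case False2: False
          then have "z \<in> F" using z by auto
          then show ?thesis using yF v False False2 unfolding v'_def by simp
        qed
      qed
    qed
  qed
qed

lemma psd_pullback:
  assumes "finite F" "symon (g ` F) m" "psdon (g ` F) m"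
  shows "psdon F (\<lambda>x y. m (g x) (g y))"
proof -
  obtain n :: nat and v where v: "\<forall>p\<in>g ` F. \<forall>q\<in>g ` F. m p q = (\<Sum>i<n. v i p * v i q)"
    using psd_decomp[OF finite_imageI[OF assms(1)] assms(2,3)] by blast
  have "\<forall>x\<in>F. \<forall>y\<in>F. m (g x) (g y) = (\<Sum>i<n. v i (g x) * v i (g y))" using v by blast
  from qf_gram[OF this] show ?thesis unfolding psdon_def by (simp add: sum_nonneg)
qed

lemma schur:
  assumes "finite F" "psdon F P" "symon F R" "psdon F R"
  shows "psdon F (\<lambda>x y. P x y * R x y)"
proof -
  obtain n :: nat and v where v: "\<forall>x\<in>F. \<forall>y\<in>F. R x y = (\<Sum>i<n. v i x * v i y)"
    using psd_decomp[OF assms(1,3,4)] by blast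
  show ?thesis unfolding psdon_def
  proof
    fix a
    have "qf F (\<lambda>x y. P x y * R x y) a = (\<Sum>i<n. qf F P (\<lambda>x. a x * v i x))"
      unfolding qf_def using v
      by (simp add: sum_distrib_left sum.swap[of _ F "{..<n}"] algebra_simps cong: sum.cong)
    also have "\<dots> \<ge> 0" using assms(2) by (simp add: sum_nonneg qf_nonneg)
    finally show "0 \<le> qf F (\<lambda>x y. P x y * R x y) a" .
  qed
qed

lemma qf_add_kernel: "qf F (\<lambda>x y. A x y + B x y) a = qf F A a + qf F B a"
  unfolding qf_def by (simp add: sum.distrib algebra_simps)

lemma psdon_add: "psdon F A \<Longrightarrow> psdon F B \<Longrightarrow> psdon F (\<lambda>x y. A x y + B x y)"
  unfolding psdon_def qf_add_kernel by (simp add: add_nonneg_nonneg)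

lemma prod_psd:
  assumes "finite F" "finite u" "\<And>j. j \<in> u \<Longrightarrow> psdon F (A j) \<and> symon F (A j)"
  shows "psdon F (\<lambda>x y. \<Prod>j\<in>u. A j x y) \<and> symon F (\<lambda>x y. \<Prod>j\<in>u. A j x y)"
  using assms(2,3)
proof (induction u rule: finite_induct)
  case empty
  have "qf F (\<lambda>x y. 1) a = (\<Sum>x\<in>F. a x)^2" for a
    unfolding qf_def by (simp add: power2_eq_square sum_product)
  then show ?case unfolding psdon_def symon_def by simp
next
  case (insert j u)
  have s: "symon F (\<lambda>x y. \<Prod>j\<in>insert j u. A j x y)"
    using insert unfolding symon_def by (simp add: prod.insert)
  have "psdon F (\<lambda>x y. A j x y * (\<Prod>j\<in>u. A j x y))"
    using schur[OF assms(1)] insert by blast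
  then show ?case using s insert by simp
qed

lemma prod_mono_psd:
  assumes "finite F" "finite u"
    "\<And>j. j \<in> u \<Longrightarrow> psdon F (A j) \<and> symon F (A j) \<and> psdon F (\<lambda>x y. B j x y - A j x y) \<and> symon F (B j)"
  shows "psdon F (\<lambda>x y. (\<Prod>j\<in>u. B j x y) - (\<Prod>j\<in>u. A j x y))"
  using assms(2,3)
proof (induction u rule: finite_induct)
  case empty
  then show ?case unfolding psdon_def qf_def by simp
next
  case (insert j u)
  have Bpsd: "psdon F (B i) \<and> symon F (B i)" if "i \<in> insert j u" for i
  proof -
    have "psdon F (\<lambda>x y. A i x y + (B i x y - A i x y))" using psdon_add insert(4)[OF that] by blast
    then show ?thesis using insert(4)[OF that] by simp
  qed
  have PB: "psdon F (\<lambda>x y. \<Prod>j\<in>u. B j x y)" "symon F (\<lambda>x y. \<Prod>j\<in>u. B j x y)"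
    using prod_psd[OF assms(1) insert(1), of B] Bpsd by auto
  have PA: "symon F (\<lambda>x y. \<Prod>j\<in>u. A j x y)"
    using prod_psd[OF assms(1) insert(1), of A] insert(4) by auto
  have IH: "psdon F (\<lambda>x y. (\<Prod>j\<in>u. B j x y) - (\<Prod>j\<in>u. A j x y))" using insert by blast
  have s2: "symon F (\<lambda>x y. (\<Prod>j\<in>u. B j x y) - (\<Prod>j\<in>u. A j x y))"
    using PB(2) PA unfolding symon_def by simp
  have t1: "psdon F (\<lambda>x y. (B j x y - A j x y) * (\<Prod>j\<in>u. B j x y))"
    by (rule schur[OF assms(1) _ PB(2) PB(1)]) (use insert(4) in blast)
  have t2: "psdon F (\<lambda>x y. A j x y * ((\<Prod>j\<in>u. B j x y) - (\<Prod>j\<in>u. A j x y)))"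
    by (rule schur[OF assms(1) _ s2 IH]) (use insert(4) in blast)
  have "psdon F (\<lambda>x y. (B j x y - A j x y) * (\<Prod>j\<in>u. B j x y) + A j x y * ((\<Prod>j\<in>u. B j x y) - (\<Prod>j\<in>u. A j x y)))"
    by (rule psdon_add[OF t1 t2])
  then show ?case using insert(1,2) by (simp add: algebra_simps)
qed


lemma Delta_empty: "Delta {} g u = g u"
  unfolding Delta_def by simp

lemma Delta_insert:
  assumes "finite v" "j \<notin> v" "j \<notin> u"
  shows "Delta (insert j v) g u = Delta v g u - Delta v g (insert j u)"
proof -
  have inj: "inj_on (insert j) (Pow v)" using assms(2) unfolding inj_on_def by (auto simp: insert_eq_iff)
  have disj: "Pow v \<inter> insert j ` Pow v = {}" using assms(2) by auto
  have "Delta (insert j v) g u = (\<Sum>w\<in>Pow v. (-1) ^ card w * g (u \<union> w)) + (\<Sum>w\<in>insert j ` Pow v. (-1) ^ card w * g (u \<union> w))"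
    unfolding Delta_def Pow_insert using assms(1) disj by (simp add: sum.union_disjoint)
  also have "(\<Sum>w\<in>insert j ` Pow v. (-1) ^ card w * g (u \<union> w)) = (\<Sum>w\<in>Pow v. (-1) ^ card (insert j w) * g (u \<union> insert j w))"
    by (simp add: sum.reindex[OF inj])
  also have "\<dots> = (\<Sum>w\<in>Pow v. - ((-1) ^ card w * g (insert j u \<union> w)))"
  proof (rule sum.cong[OF refl])
    fix w assume w: "w \<in> Pow v"
    then have "finite w" "j \<notin> w" using assms(1,2) finite_subset by auto
    then show "(-1) ^ card (insert j w) * g (u \<union> insert j w) = - ((-1) ^ card w * g (insert j u \<union> w))"
      by simp
  qed
  finally show ?thesis unfolding Delta_def by (simp add: sum_negf)
qed

lemma moebius:
  assumes "finite B" "finite v" "B \<inter> v = {}"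
  shows "(\<Sum>u\<in>{u. v \<subseteq> u \<and> u \<subseteq> v \<union> B}. Delta ((v \<union> B) - u) g u) = g v"
  using assms
proof (induction B rule: finite_induct)
  case empty
  have "{u. v \<subseteq> u \<and> u \<subseteq> v \<union> {}} = {v}" by auto
  then show ?case by (simp add: Delta_empty)
next
  case (insert j B)
  define S' where "S' = {u. v \<subseteq> u \<and> u \<subseteq> v \<union> B}"
  have jv: "j \<notin> v" using insert by auto
  have fS': "finite S'" unfolding S'_def
    by (rule finite_subset[of _ "Pow (v \<union> B)"]) (use insert in auto)
  have jS': "j \<notin> u" if "u \<in> S'" for u using that insert(2) jv unfolding S'_def by auto
  have S: "{u. v \<subseteq> u \<and> u \<subseteq> v \<union> insert j B} = S' \<union> insert j ` S'"
  proof (rule set_eqI, rule iffI)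
    fix u assume u: "u \<in> {u. v \<subseteq> u \<and> u \<subseteq> v \<union> insert j B}"
    show "u \<in> S' \<union> insert j ` S'"
    proof (cases "j \<in> u")
      case True
      then have "u = insert j (u - {j})" "u - {j} \<in> S'" using u jv unfolding S'_def by auto
      then show ?thesis by blast
    next
      case False then show ?thesis using u unfolding S'_def by auto
    qed
  next
    fix u assume "u \<in> S' \<union> insert j ` S'"
    then show "u \<in> {u. v \<subseteq> u \<and> u \<subseteq> v \<union> insert j B}" unfolding S'_def by auto
  qed
  have inj: "inj_on (insert j) S'" using jS' unfolding inj_on_def by (metis insert_absorb insert_ident)
  have disj: "S' \<inter> insert j ` S' = {}" using jS' by auto
  have A1: "Delta ((v \<union> insert j B) - u) g u = Delta ((v \<union> B) - u) g u - Delta ((v \<union> B) - u) g (insert j u)"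
    if "u \<in> S'" for u
  proof -
    have "(v \<union> insert j B) - u = insert j ((v \<union> B) - u)" using jS'[OF that] by auto
    moreover have "j \<notin> (v \<union> B) - u" using insert(2) jv by auto
    ultimately show ?thesis using Delta_insert[of "(v \<union> B) - u" j u g] jS'[OF that] insert(1,4) by simp
  qed
  have A2: "Delta ((v \<union> insert j B) - insert j u) g (insert j u) = Delta ((v \<union> B) - u) g (insert j u)"
    if "u \<in> S'" for u
  proof -
    have "(v \<union> insert j B) - insert j u = (v \<union> B) - u" using insert(2) jv by auto
    then show ?thesis by simp
  qed
  have "(\<Sum>u\<in>{u. v \<subseteq> u \<and> u \<subseteq> v \<union> insert j B}. Delta ((v \<union> insert j B) - u) g u)
      = (\<Sum>u\<in>S'. Delta ((v \<union> insert j B) - u) g u) + (\<Sum>u\<in>insert j ` S'. Delta ((v \<union> insert j B) - u) g u)"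
    unfolding S using fS' disj by (simp add: sum.union_disjoint)
  also have "(\<Sum>u\<in>insert j ` S'. Delta ((v \<union> insert j B) - u) g u) = (\<Sum>u\<in>S'. Delta ((v \<union> insert j B) - insert j u) g (insert j u))"
    by (simp only: sum.reindex[OF inj] o_def)
  also have "\<dots> = (\<Sum>u\<in>S'. Delta ((v \<union> B) - u) g (insert j u))"
    by (rule sum.cong[OF refl]) (rule A2)
  also have "(\<Sum>u\<in>S'. Delta ((v \<union> insert j B) - u) g u) = (\<Sum>u\<in>S'. Delta ((v \<union> B) - u) g u - Delta ((v \<union> B) - u) g (insert j u))"
    by (rule sum.cong[OF refl]) (rule A1)
  finally show ?case using insert by (simp add: sum_subtractf S'_def)
qed


lemma idx_enat: "idx (enat n) = {1..n}" unfolding idx_def by auto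
lemma idx_inf: "idx \<infinity> = {j. 1 \<le> j}" unfolding idx_def by auto

lemma Uset_enat: "Uset (enat n) = Pow {1..n}"
  unfolding Uset_def idx_enat using finite_subset by auto

lemma fin_bound:
  assumes A: "finite A" and v: "v \<subseteq> A" and U: "finite U" "\<And>u. u \<in> U \<Longrightarrow> u \<subseteq> A"
    and nn: "\<And>u. u \<subseteq> A \<Longrightarrow> Delta (A - u) g u \<ge> 0"
  shows "(\<Sum>u\<in>{u\<in>U. v \<subseteq> u}. Delta (A - u) g u) \<le> g v"
proof -
  have fv: "finite v" using A v finite_subset by blast
  have e: "v \<union> (A - v) = A" using v by auto
  have "(\<Sum>u\<in>{u\<in>U. v \<subseteq> u}. Delta (A - u) g u) \<le> (\<Sum>u\<in>{u. v \<subseteq> u \<and> u \<subseteq> v \<union> (A - v)}. Delta ((v \<union> (A - v)) - u) g u)"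
    unfolding e
  proof (rule sum_mono2)
    show "finite {u. v \<subseteq> u \<and> u \<subseteq> A}" by (rule finite_subset[of _ "Pow A"]) (use A in auto)
    show "{u \<in> U. v \<subseteq> u} \<subseteq> {u. v \<subseteq> u \<and> u \<subseteq> A}" using U by auto
    show "\<And>u. u \<in> {u. v \<subseteq> u \<and> u \<subseteq> A} - {u \<in> U. v \<subseteq> u} \<Longrightarrow> 0 \<le> Delta (A - u) g u" using nn by auto
  qed
  also have "\<dots> = g v" by (rule moebius) (use A fv in auto)
  finally show ?thesis .
qed

lemma Tdown_facts:
  assumes Mw: "Mweights d g" and C: "C > 0"
  shows "\<And>u. u \<in> Uset d \<Longrightarrow> Tdown d C g u \<ge> 0"
    and "\<And>U v. finite U \<Longrightarrow> U \<subseteq> Uset d \<Longrightarrow> v \<in> Uset d \<Longrightarrow>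
           (\<Sum>u\<in>{u\<in>U. v \<subseteq> u}. Tdown d C g u * C^(2 * card u)) \<le> g v"
proof -
  have Cp: "C ^ k > 0" for k using C by simp
  have cancel: "(1 / C ^ k) * X * C ^ k = X" for k X using C by (simp add: field_simps)
  have Dnn: "Delta v g u \<ge> 0" if "v \<in> Uset d" "u \<in> Uset d" for u v using Mw that unfolding Mweights_def by blast
  have "(\<forall>u\<in>Uset d. Tdown d C g u \<ge> 0) \<and>
        (\<forall>U v. finite U \<longrightarrow> U \<subseteq> Uset d \<longrightarrow> v \<in> Uset d \<longrightarrow>
           (\<Sum>u\<in>{u\<in>U. v \<subseteq> u}. Tdown d C g u * C^(2 * card u)) \<le> g v)"
  proof (cases d)
    case (enat n)
    have T: "Tdown d C g u * C^(2 * card u) = Delta ({1..n} - u) g u" for u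
      unfolding Tdown_def enat using C by simp
    have nn: "Delta ({1..n} - u) g u \<ge> 0" if "u \<subseteq> {1..n}" for u
      by (rule Dnn) (use that in \<open>auto simp: enat Uset_enat\<close>)
    show ?thesis
    proof (intro conjI ballI allI impI)
      fix u assume "u \<in> Uset d"
      then have "Tdown d C g u * C^(2 * card u) \<ge> 0" using T nn by (simp add: enat Uset_enat)
      then show "Tdown d C g u \<ge> 0" using Cp[of "2 * card u"] by (simp add: zero_le_mult_iff)
    next
      fix U v assume U: "finite U" "U \<subseteq> Uset d" and v: "v \<in> Uset d"
      show "(\<Sum>u\<in>{u\<in>U. v \<subseteq> u}. Tdown d C g u * C^(2 * card u)) \<le> g v"
        unfolding T by (rule fin_bound) (use U v nn in \<open>auto simp: enat Uset_enat\<close>)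
    qed
  next
    case infinity
    have Uinf: "u \<in> Uset d \<longleftrightarrow> finite u \<and> (\<forall>j\<in>u. 1 \<le> j)" for u
      unfolding Uset_def infinity idx_inf by auto
    define X where "X u s = Delta ({1..s} - u) g u" for u s
    have T: "Tdown d C g u * C^(2 * card u) = lim (X u)" for u
      unfolding Tdown_def infinity X_def using C by simp
    have Xnn: "X u s \<ge> 0" if "u \<in> Uset d" for u s
      unfolding X_def by (rule Dnn) (use that in \<open>auto simp: Uinf\<close>)
    have Xdec: "decseq (X u)" if u: "u \<in> Uset d" for u
    proof (rule decseq_SucI)
      fix s
      show "X u (Suc s) \<le> X u s"
      proof (cases "Suc s \<in> u")
        case True
        then have "{1..Suc s} - u = {1..s} - u" by (auto simp: le_Suc_eq)
        then show ?thesis unfolding X_def by simp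
      next
        case False
        then have e: "{1..Suc s} - u = insert (Suc s) ({1..s} - u)" by auto
        have "X u (Suc s) = X u s - Delta ({1..s} - u) g (insert (Suc s) u)"
          unfolding X_def e by (rule Delta_insert) (use False in auto)
        moreover have "Delta ({1..s} - u) g (insert (Suc s) u) \<ge> 0"
          by (rule Dnn) (use u in \<open>auto simp: Uinf\<close>)
        ultimately show ?thesis by simp
      qed
    qed
    have Xlim: "lim (X u) \<ge> 0 \<and> (\<forall>s. lim (X u) \<le> X u s)" if u: "u \<in> Uset d" for u
    proof -
      obtain L where L: "X u \<longlonglongrightarrow> L" "\<forall>i. L \<le> X u i"
        using decseq_convergent[OF Xdec[OF u], of 0] Xnn[OF u] by blast
      have "lim (X u) = L" using L(1) by (rule limI)
      moreover have "L \<ge> 0" by (rule LIMSEQ_le_const[OF L(1)]) (use Xnn[OF u] in auto)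
      ultimately show ?thesis using L(2) by simp
    qed
    show ?thesis
    proof (intro conjI ballI allI impI)
      fix u assume "u \<in> Uset d"
      then have "Tdown d C g u * C^(2 * card u) \<ge> 0" using T Xlim by simp
      then show "Tdown d C g u \<ge> 0" using Cp[of "2 * card u"] by (simp add: zero_le_mult_iff)
    next
      fix U v assume U: "finite U" "U \<subseteq> Uset d" and v: "v \<in> Uset d"
      define W where "W = \<Union>U \<union> v"
      have fW: "finite W" unfolding W_def using U v by (auto simp: Uinf subset_iff intro!: finite_Union)
      define s0 where "s0 = Max (insert 0 W)"
      have Ws: "W \<subseteq> {1..s0}"
      proof
        fix j assume j: "j \<in> W"
        then have "1 \<le> j" using U v unfolding W_def by (auto simp: Uinf)
        moreover have "j \<le> s0" unfolding s0_def using fW j by simp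
        ultimately show "j \<in> {1..s0}" by simp
      qed
      have "(\<Sum>u\<in>{u\<in>U. v \<subseteq> u}. Tdown d C g u * C^(2 * card u)) \<le> (\<Sum>u\<in>{u\<in>U. v \<subseteq> u}. X u s0)"
        unfolding T by (rule sum_mono) (use Xlim U in blast)
      also have "\<dots> \<le> g v" unfolding X_def
      proof (rule fin_bound)
        show "v \<subseteq> {1..s0}" using Ws unfolding W_def by auto
        show "\<And>u. u \<in> U \<Longrightarrow> u \<subseteq> {1..s0}" using Ws unfolding W_def by auto
        show "\<And>u. u \<subseteq> {1..s0} \<Longrightarrow> 0 \<le> Delta ({1..s0} - u) g u"
          by (rule Dnn) (auto simp: Uinf intro: finite_subset)
      qed (use U in auto)
      finally show "(\<Sum>u\<in>{u\<in>U. v \<subseteq> u}. Tdown d C g u * C^(2 * card u)) \<le> g v" .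
    qed
  qed
  then show "\<And>u. u \<in> Uset d \<Longrightarrow> Tdown d C g u \<ge> 0"
    and "\<And>U v. finite U \<Longrightarrow> U \<subseteq> Uset d \<Longrightarrow> v \<in> Uset d \<Longrightarrow>
           (\<Sum>u\<in>{u\<in>U. v \<subseteq> u}. Tdown d C g u * C^(2 * card u)) \<le> g v" by blast+
qed


lemma PiE_in_D: "x \<in> PiE (idx d) (\<lambda>_. D) \<Longrightarrow> u \<in> Uset d \<Longrightarrow> j \<in> u \<Longrightarrow> x j \<in> D"
  unfolding Uset_def by (auto simp: PiE_iff)

lemma prodk_eq: "prodk m u = (\<lambda>x y. \<Prod>j\<in>u. m (x j) (y j))"
  by (intro ext) (simp add: prodk_def)

lemma prodk_psd:
  assumes rk: "repr_kernel D m" and u: "u \<in> Uset d" and F: "finite F" "F \<subseteq> PiE (idx d) (\<lambda>_. D)"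
  shows "psdon F (prodk m u) \<and> symon F (prodk m u)"
proof -
  have fu: "finite u" using u unfolding Uset_def by auto
  have "psdon F (\<lambda>x y. \<Prod>j\<in>u. m (x j) (y j)) \<and> symon F (\<lambda>x y. \<Prod>j\<in>u. m (x j) (y j))"
  proof (rule prod_psd[OF F(1) fu])
    fix j assume j: "j \<in> u"
    have sub: "(\<lambda>x. x j) ` F \<subseteq> D"
    proof (rule image_subsetI)
      fix x assume "x \<in> F"
      then have "x \<in> PiE (idx d) (\<lambda>_. D)" using F(2) by blast
      then show "x j \<in> D" by (rule PiE_in_D[OF _ u j])
    qed
    have s1: "symon ((\<lambda>x. x j) ` F) m" by (rule rk_sym[OF rk sub])
    have p1: "psdon ((\<lambda>x. x j) ` F) m" by (rule rk_psd[OF rk finite_imageI[OF F(1)] sub])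
    have "psdon F (\<lambda>x y. m (x j) (y j))" using psd_pullback[OF F(1) s1 p1] .
    moreover have "symon F (\<lambda>x y. m (x j) (y j))" unfolding symon_def
    proof (intro ballI)
      fix x y assume "x \<in> F" "y \<in> F"
      then have "x j \<in> (\<lambda>x. x j) ` F" "y j \<in> (\<lambda>x. x j) ` F" by auto
      then show "m (x j) (y j) = m (y j) (x j)" using s1 unfolding symon_def by blast
    qed
    ultimately show "psdon F (\<lambda>x y. m (x j) (y j)) \<and> symon F (\<lambda>x y. m (x j) (y j))" by blast
  qed
  then show ?thesis unfolding prodk_eq .
qed

lemma qf_two: "x \<noteq> y \<Longrightarrow> qf {x, y} P a = a x * a x * P x x + a x * a y * P x y + a y * a x * P y x + a y * a y * P y y"
  by (simp add: qf_def)

lemma psd_abs_bound: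
  assumes "psdon {x, y} P" "symon {x, y} P"
  shows "\<bar>P x y\<bar> \<le> (P x x + P y y) / 2" and "P x x \<ge> 0"
proof -
  have d: "P x x \<ge> 0"
    using qf_nonneg[OF assms(1), of "delta x"] qf_delta[of "{x, y}" x P] by simp
  show "P x x \<ge> 0" by (rule d)
  show "\<bar>P x y\<bar> \<le> (P x x + P y y) / 2"
  proof (cases "x = y")
    case True then show ?thesis using d by simp
  next
    case False
    have s: "P y x = P x y" using assms(2) unfolding symon_def by blast
    have 1: "0 \<le> qf {x, y} P (\<lambda>z. if z = x then 1 else if z = y then 1 else 0)" by (rule qf_nonneg[OF assms(1)])
    have 2: "0 \<le> qf {x, y} P (\<lambda>z. if z = x then 1 else if z = y then -1 else 0)" by (rule qf_nonneg[OF assms(1)])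
    have ne: "y \<noteq> x" using False by blast
    have e1: "qf {x, y} P (\<lambda>z. if z = x then 1 else if z = y then 1 else 0) = P x x + 2 * P x y + P y y"
      unfolding qf_two[OF False] using ne s by simp
    have e2: "qf {x, y} P (\<lambda>z. if z = x then 1 else if z = y then -1 else 0) = P x x - 2 * P x y + P y y"
      unfolding qf_two[OF False] using ne s by simp
    have "0 \<le> P x x - 2 * P x y + P y y" using 2 e2 by simp
    then have "P x y \<le> (P x x + P y y) / 2" by (simp add: field_simps)
    moreover have "0 \<le> P x x + 2 * P x y + P y y" using 1 e1 by simp
    then have "- P x y \<le> (P x x + P y y) / 2" by (simp add: field_simps)
    ultimately show ?thesis unfolding abs_le_iff by blast
  qed
qed

lemma prodk_bounds:
  assumes rk: "repr_kernel D m" and u: "u \<in> Uset d" and x: "x \<in> PiE (idx d) (\<lambda>_. D)" and y: "y \<in> PiE (idx d) (\<lambda>_. D)"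
  shows "\<bar>prodk m u x y\<bar> \<le> (prodk m u x x + prodk m u y y) / 2" "prodk m u x x \<ge> 0"
proof -
  have "psdon {x, y} (prodk m u) \<and> symon {x, y} (prodk m u)" by (rule prodk_psd[OF rk u]) (use x y in auto)
  then show "\<bar>prodk m u x y\<bar> \<le> (prodk m u x x + prodk m u y y) / 2" "prodk m u x x \<ge> 0"
    using psd_abs_bound[of x y "prodk m u"] by blast+
qed

lemma Zset_summable:
  assumes rk: "repr_kernel D m" and w: "weights d \<eta>" and x: "x \<in> Zset d D \<eta> m" and y: "y \<in> Zset d D \<eta> m"
  shows "(\<lambda>u. \<eta> u * prodk m u x y) summable_on Uset d"
proof -
  have xP: "x \<in> PiE (idx d) (\<lambda>_. D)" and sx: "(\<lambda>u. \<eta> u * prodk m u x x) summable_on Uset d"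
    using x unfolding Zset_def by auto
  have yP: "y \<in> PiE (idx d) (\<lambda>_. D)" and sy: "(\<lambda>u. \<eta> u * prodk m u y y) summable_on Uset d"
    using y unfolding Zset_def by auto
  define g where "g u = (1/2) * (\<eta> u * prodk m u x x + \<eta> u * prodk m u y y)" for u
  have gs: "g summable_on Uset d" unfolding g_def
    by (intro summable_on_cmult_right summable_on_add sx sy)
  have gnn: "g u \<ge> 0" if "u \<in> Uset d" for u
    using prodk_bounds(2)[OF rk that xP xP] prodk_bounds(2)[OF rk that yP yP] w that
    unfolding g_def weights_def by simp
  have "(\<lambda>u. norm (g u)) summable_on Uset d"
    using gs by (subst summable_on_cong[where g = g]) (use gnn in auto)
  then have "(\<lambda>u. norm (\<eta> u * prodk m u x y)) summable_on Uset d"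
  proof (rule Infinite_Sum.abs_summable_on_comparison_test)
    fix u assume u: "u \<in> Uset d"
    have "\<bar>\<eta> u * prodk m u x y\<bar> = \<eta> u * \<bar>prodk m u x y\<bar>" using w u unfolding weights_def by (simp add: abs_mult)
    also have "\<dots> \<le> \<eta> u * ((prodk m u x x + prodk m u y y) / 2)"
      using prodk_bounds(1)[OF rk u xP yP] w u unfolding weights_def by (intro mult_left_mono) auto
    also have "\<dots> = g u" unfolding g_def by (simp add: algebra_simps)
    finally show "norm (\<eta> u * prodk m u x y) \<le> norm (g u)" using gnn[OF u] by simp
  qed
  then show ?thesis using summable_on_iff_abs_summable_on_real by blast
qed

lemma has_sum_finsum:
  fixes f :: "'i \<Rightarrow> 'u \<Rightarrow> real"
  assumes "finite I" "\<And>i. i \<in> I \<Longrightarrow> (f i has_sum s i) A"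
  shows "((\<lambda>u. \<Sum>i\<in>I. f i u) has_sum (\<Sum>i\<in>I. s i)) A"
  using assms
proof (induction I rule: finite_induct)
  case empty then show ?case by simp
next
  case (insert i I)
  have "((\<lambda>u. f i u + (\<Sum>i\<in>I. f i u)) has_sum (s i + (\<Sum>i\<in>I. s i))) A"
    by (rule has_sum_add) (use insert in auto)
  then show ?case using insert by simp
qed

lemma qf_Mker:
  assumes rk: "repr_kernel D m" and w: "weights d \<eta>" and F: "finite F" "F \<subseteq> Zset d D \<eta> m"
  shows "((\<lambda>u. \<eta> u * qf F (prodk m u) a) has_sum qf F (Mker d \<eta> m) a) (Uset d)"
proof -
  have h: "((\<lambda>u. a x * a y * (\<eta> u * prodk m u x y)) has_sum (a x * a y * Mker d \<eta> m x y)) (Uset d)"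
    if "x \<in> F" "y \<in> F" for x y
    unfolding Mker_def
    by (rule has_sum_cmult_right, rule has_sum_infsum, rule Zset_summable[OF rk w]) (use F that in auto)
  have "((\<lambda>u. \<Sum>x\<in>F. \<Sum>y\<in>F. a x * a y * (\<eta> u * prodk m u x y)) has_sum (\<Sum>x\<in>F. \<Sum>y\<in>F. a x * a y * Mker d \<eta> m x y)) (Uset d)"
    by (intro has_sum_finsum F(1)) (use h in auto)
  moreover have "(\<Sum>x\<in>F. \<Sum>y\<in>F. a x * a y * (\<eta> u * prodk m u x y)) = \<eta> u * qf F (prodk m u) a" for u
    unfolding qf_def by (simp add: sum_distrib_left algebra_simps)
  ultimately show ?thesis unfolding qf_def[of F "Mker d \<eta> m"] by simp
qed

lemma Mker_rk:
  assumes rk: "repr_kernel D m" and w: "weights d \<eta>"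
  shows "repr_kernel (Zset d D \<eta> m) (Mker d \<eta> m)"
  unfolding repr_kernel_iff
proof (intro conjI allI impI)
  show "symon (Zset d D \<eta> m) (Mker d \<eta> m)" unfolding symon_def
  proof (intro ballI)
    fix x y assume x: "x \<in> Zset d D \<eta> m" and y: "y \<in> Zset d D \<eta> m"
    have xP: "x \<in> PiE (idx d) (\<lambda>_. D)" "y \<in> PiE (idx d) (\<lambda>_. D)" using x y unfolding Zset_def by auto
    have "prodk m u x y = prodk m u y x" if "u \<in> Uset d" for u
    proof -
      have "symon {x, y} (prodk m u)" using prodk_psd[OF rk that, of "{x, y}"] xP by blast
      then show ?thesis unfolding symon_def by blast
    qed
    then show "Mker d \<eta> m x y = Mker d \<eta> m y x" unfolding Mker_def by (intro infsum_cong) auto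
  qed
next
  fix F assume F: "finite F \<and> F \<subseteq> Zset d D \<eta> m"
  have FP: "F \<subseteq> PiE (idx d) (\<lambda>_. D)" using F unfolding Zset_def by auto
  show "psdon F (Mker d \<eta> m)" unfolding psdon_def
  proof
    fix a
    show "0 \<le> qf F (Mker d \<eta> m) a"
    proof (rule has_sum_nonneg[OF qf_Mker[OF rk w, of F a]])
      fix u assume u: "u \<in> Uset d"
      show "0 \<le> \<eta> u * qf F (prodk m u) a"
        using w u prodk_psd[OF rk u] F FP qf_nonneg unfolding weights_def by (metis mult_nonneg_nonneg)
    qed (use F in auto)
  qed
qed


lemma qf_cong: "(\<And>x. x \<in> F \<Longrightarrow> a x = b x) \<Longrightarrow> qf F M a = qf F M b"
  unfolding qf_def by (intro sum.cong refl) auto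

lemma qf_lin_kernel: "qf F (\<lambda>x y. c * A x y - B x y) a = c * qf F A a - qf F B a"
  unfolding qf_def by (simp add: sum_subtractf sum_distrib_left algebra_simps)

lemma qf_scale_sum: "qf F (\<lambda>x y. c * (\<Sum>v\<in>V. M v x y)) a = c * (\<Sum>v\<in>V. qf F (M v) a)"
  unfolding qf_def by (simp add: sum_distrib_left sum.swap[of _ F V] sum.swap[of _ F V] algebra_simps)

lemma qf_const1: "qf F (\<lambda>x y. 1) a = (\<Sum>x\<in>F. a x)^2"
  unfolding qf_def by (simp add: power2_eq_square sum_product)

lemma rk_one_plus:
  assumes "repr_kernel D k" shows "repr_kernel D (\<lambda>x y. 1 + k x y)"
  unfolding repr_kernel_iff
proof (intro conjI allI impI)
  show "symon D (\<lambda>x y. 1 + k x y)" using rk_sym[OF assms order_refl] unfolding symon_def by simp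
  fix F assume F: "finite F \<and> F \<subseteq> D"
  show "psdon F (\<lambda>x y. 1 + k x y)" unfolding psdon_def
  proof
    fix a
    have "qf F (\<lambda>x y. 1 + k x y) a = (\<Sum>x\<in>F. a x)^2 + qf F k a"
      using qf_add_kernel[of F "\<lambda>x y. 1" k a] qf_const1 by simp
    moreover have "qf F k a \<ge> 0" using qf_nonneg rk_psd[OF assms] F by blast
    ultimately show "0 \<le> qf F (\<lambda>x y. 1 + k x y) a" by simp
  qed
qed

lemma const_approx:
  assumes "finite F" "F \<subseteq> Z" "\<And>x. x \<notin> F \<Longrightarrow> a x = 0"
  shows "approx_seq M Z (comb_eval M a) (\<lambda>n. a)"
  unfolding approx_seq_def fin_comb_def
proof (intro conjI allI impI ballI)
  fix n show "finite (supp a)" using assms(1,3) finite_subset[of "supp a" F] by blast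
  show "supp a \<subseteq> Z" using assms(2,3) by blast
next
  fix e :: real assume "e > 0"
  then show "\<exists>N. \<forall>m\<ge>N. \<forall>n\<ge>N. comb_sqnorm M (\<lambda>y. a y - a y) < e" by (simp add: comb_sqnorm_def)
qed simp

lemma D1:
  fixes k l :: "'a \<Rightarrow> 'a \<Rightarrow> real"
  assumes rkk: "repr_kernel D k" and rkl: "repr_kernel D l"
    and sub: "rkhs l D \<subseteq> rkhs (\<lambda>x y. 1 + k x y) D"
    and C: "C > 0"
    and nrm: "\<forall>f\<in>rkhs l D. rkhs_norm (\<lambda>x y. 1 + k x y) D f \<le> C * rkhs_norm l D f"
    and F: "finite F" "F \<subseteq> D"
  shows "qf F l a \<le> C^2 * qf F (\<lambda>x y. 1 + k x y) a"
proof -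
  define a' where "a' x = (if x \<in> F then a x else 0)" for x
  define g where "g = comb_eval l a'"
  have a'0: "\<And>x. x \<notin> F \<Longrightarrow> a' x = 0" unfolding a'_def by simp
  have ap: "approx_seq l D g (\<lambda>n. a')" unfolding g_def by (rule const_approx[OF F a'0])
  have gin: "g \<in> rkhs l D" using ap unfolding rkhs_def by blast
  have suppF: "supp a' \<subseteq> F" using a'0 by blast
  define q where "q = qf F l a"
  have qa: "comb_sqnorm l a' = q"
  proof -
    have "comb_sqnorm l a' = qf F l a'" by (rule comb_sqnorm_qf[OF F(1) suppF])
    also have "\<dots> = qf F l a" by (rule qf_cong) (simp add: a'_def)
    finally show ?thesis unfolding q_def .
  qed
  have q0: "q \<ge> 0" unfolding q_def using qf_nonneg rk_psd[OF rkl F] by blast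
  have nl: "rkhs_norm l D g = sqrt q"
    using rkhs_norm_eq[OF rkl ap] qa by simp
  have rk1: "repr_kernel D (\<lambda>x y. 1 + k x y)" by (rule rk_one_plus[OF rkk])
  define N1 where "N1 = rkhs_norm (\<lambda>x y. 1 + k x y) D g"
  have N10: "N1 \<ge> 0" unfolding N1_def using rkhs_norm_nonneg[OF rk1] sub gin by blast
  have N1le: "N1 \<le> C * sqrt q" unfolding N1_def using bspec[OF nrm gin] nl by simp
  define Q1 where "Q1 = qf F (\<lambda>x y. 1 + k x y) a"
  have Q10: "Q1 \<ge> 0" unfolding Q1_def using qf_nonneg rk_psd[OF rk1 F] by blast
  have sg: "(\<Sum>x\<in>F. a x * g x) = q"
  proof -
    have "(\<Sum>x\<in>F. a x * g x) = (\<Sum>x\<in>F. a x * ev F l a' x)"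
      unfolding g_def using comb_eval_ev[OF F(1) suppF] by simp
    also have "\<dots> = bf F l a a'" by (simp add: bf_ev)
    also have "\<dots> = q" unfolding bf_def q_def qf_def a'_def by (intro sum.cong refl) auto
    finally show ?thesis .
  qed
  have gin1: "g \<in> rkhs (\<lambda>x y. 1 + k x y) D" using sub gin by blast
  have "q^2 \<le> N1^2 * Q1" using rkhs_bound[OF rk1 gin1 F, of a] sg by (simp add: N1_def Q1_def)
  also have "\<dots> \<le> (C * sqrt q)^2 * Q1" using N10 N1le Q10 by (intro mult_right_mono power_mono) auto
  also have "\<dots> = C^2 * q * Q1" using q0 by (simp add: power_mult_distrib)
  finally have "q * q \<le> q * (C^2 * Q1)" by (simp add: power2_eq_square algebra_simps)
  then have "q \<le> C^2 * Q1" using q0 C Q10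
    by (cases "q = 0") (auto simp: mult_le_cancel_left)
  then show ?thesis unfolding q_def Q1_def .
qed

lemma coord_psd:
  assumes rk: "repr_kernel D m" and u: "u \<in> Uset d" and j: "j \<in> u"
    and F: "finite F" "F \<subseteq> PiE (idx d) (\<lambda>_. D)"
  shows "psdon F (\<lambda>x y. m (x j) (y j)) \<and> symon F (\<lambda>x y. m (x j) (y j))"
proof -
  have "psdon F (prodk m {j}) \<and> symon F (prodk m {j})"
  proof (rule prodk_psd[OF rk _ F])
    show "{j} \<in> Uset d" using u j unfolding Uset_def by auto
  qed
  then show ?thesis by (simp add: prodk_eq)
qed


lemma prodB_eq:
  fixes C :: real
  assumes fu: "finite u"
  shows "(\<Prod>j\<in>u. C^2 * (1 + k (x j) (y j))) = C^(2 * card u) * (\<Sum>v\<in>Pow u. prodk k v x y)"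
proof -
  have "(\<Prod>j\<in>u. C^2 * (1 + k (x j) (y j))) = (C^2)^card u * (\<Prod>j\<in>u. k (x j) (y j) + 1)"
    by (simp add: prod.distrib add.commute)
  also have "(\<Prod>j\<in>u. k (x j) (y j) + 1) = (\<Sum>X\<in>Pow u. (\<Prod>j\<in>X. k (x j) (y j)) * (\<Prod>j\<in>u - X. 1))"
    by (rule prod_add[OF fu])
  also have "\<dots> = (\<Sum>v\<in>Pow u. prodk k v x y)" by (simp add: prodk_def)
  finally show ?thesis by (simp add: power_mult)
qed

lemma key_partial:
  fixes k l :: "'a \<Rightarrow> 'a \<Rightarrow> real"
  assumes rkk: "repr_kernel D k" and rkl: "repr_kernel D l" and C: "C > 0"
    and Pk: "repr_kernel D (\<lambda>s t. C^2 * (1 + k s t) - l s t)"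
    and Mw: "Mweights d gs" and le: "weight_le d gs g" and w: "weights d g"
    and F: "finite F" "F \<subseteq> Zset d D g k" and U: "finite U" "U \<subseteq> Uset d"
  shows "(\<Sum>u\<in>U. Tdown d C gs u * qf F (prodk l u) a) \<le> infsum (\<lambda>v. g v * qf F (prodk k v) a) (Uset d)"
proof -
  have FP: "F \<subseteq> PiE (idx d) (\<lambda>_. D)" using F(2) unfolding Zset_def by auto
  define q where "q v = qf F (prodk k v) a" for v
  have q0: "q v \<ge> 0" if "v \<in> Uset d" for v
    unfolding q_def using prodk_psd[OF rkk that F(1) FP] qf_nonneg by blast
  have stepa: "qf F (prodk l u) a \<le> C^(2 * card u) * (\<Sum>v\<in>Pow u. q v)" if u: "u \<in> Uset d" for u
  proof -
    have fu: "finite u" using u unfolding Uset_def by auto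
    define A :: "nat \<Rightarrow> (nat \<Rightarrow> 'a) \<Rightarrow> (nat \<Rightarrow> 'a) \<Rightarrow> real" where "A j = (\<lambda>x y. l (x j) (y j))" for j
    define B :: "nat \<Rightarrow> (nat \<Rightarrow> 'a) \<Rightarrow> (nat \<Rightarrow> 'a) \<Rightarrow> real" where "B j = (\<lambda>x y. C^2 * (1 + k (x j) (y j)))" for j
    have "psdon F (\<lambda>x y. (\<Prod>j\<in>u. B j x y) - (\<Prod>j\<in>u. A j x y))"
    proof (rule prod_mono_psd[OF F(1) fu])
      fix j assume j: "j \<in> u"
      have 1: "psdon F (A j) \<and> symon F (A j)" unfolding A_def by (rule coord_psd[OF rkl u j F(1) FP])
      have 2: "psdon F (\<lambda>x y. B j x y - A j x y)" unfolding A_def B_def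
        using coord_psd[OF Pk u j F(1) FP] by simp
      have 3: "symon F (B j)" unfolding symon_def B_def
      proof (intro ballI)
        fix x y assume x: "x \<in> F" and y: "y \<in> F"
        have xP: "x \<in> PiE (idx d) (\<lambda>_. D)" using x FP by blast
        have yP: "y \<in> PiE (idx d) (\<lambda>_. D)" using y FP by blast
        have s: "symon D k" by (rule rk_sym[OF rkk order_refl])
        have "k (x j) (y j) = k (y j) (x j)"
          using s PiE_in_D[OF xP u j] PiE_in_D[OF yP u j] unfolding symon_def by blast
        then show "C^2 * (1 + k (x j) (y j)) = C^2 * (1 + k (y j) (x j))" by simp
      qed
      show "psdon F (A j) \<and> symon F (A j) \<and> psdon F (\<lambda>x y. B j x y - A j x y) \<and> symon F (B j)"
        using 1 2 3 by blast
    qed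
    then have "0 \<le> qf F (\<lambda>x y. 1 * (\<Prod>j\<in>u. B j x y) - (\<Prod>j\<in>u. A j x y)) a"
      using qf_nonneg by simp
    then have le1: "qf F (\<lambda>x y. \<Prod>j\<in>u. A j x y) a \<le> qf F (\<lambda>x y. \<Prod>j\<in>u. B j x y) a"
      unfolding qf_lin_kernel by simp
    have eA: "(\<lambda>x y. \<Prod>j\<in>u. A j x y) = prodk l u" unfolding A_def prodk_eq ..
    have eB: "(\<lambda>x y. \<Prod>j\<in>u. B j x y) = (\<lambda>x y. C^(2 * card u) * (\<Sum>v\<in>Pow u. prodk k v x y))"
      unfolding B_def using prodB_eq[OF fu] by (intro ext) blast
    show ?thesis using le1 unfolding eA eB qf_scale_sum q_def .
  qed
  have T0: "Tdown d C gs u \<ge> 0" if "u \<in> Uset d" for u using Tdown_facts(1)[OF Mw C that] .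
  define V where "V = \<Union> (Pow ` U)"
  have fV: "finite V" unfolding V_def using U(1) U(2) unfolding Uset_def by auto
  have VU: "V \<subseteq> Uset d" unfolding V_def using U(2) unfolding Uset_def by (auto intro: finite_subset)
  have powV: "Pow u = {v \<in> V. v \<subseteq> u}" if "u \<in> U" for u unfolding V_def using that by auto
  have "(\<Sum>u\<in>U. Tdown d C gs u * qf F (prodk l u) a) \<le> (\<Sum>u\<in>U. Tdown d C gs u * (C^(2 * card u) * (\<Sum>v\<in>Pow u. q v)))"
    by (rule sum_mono, rule mult_left_mono) (use stepa T0 U in auto)
  also have "\<dots> = (\<Sum>u\<in>U. \<Sum>v\<in>{v \<in> V. v \<subseteq> u}. (Tdown d C gs u * C^(2 * card u)) * q v)"
    by (intro sum.cong refl) (simp add: powV sum_distrib_left mult.assoc)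
  also have "\<dots> = (\<Sum>v\<in>V. \<Sum>u\<in>{u \<in> U. v \<subseteq> u}. (Tdown d C gs u * C^(2 * card u)) * q v)"
    by (rule sum.swap_restrict[OF U(1) fV])
  also have "\<dots> = (\<Sum>v\<in>V. (\<Sum>u\<in>{u \<in> U. v \<subseteq> u}. Tdown d C gs u * C^(2 * card u)) * q v)"
    by (simp add: sum_distrib_right)
  also have "\<dots> \<le> (\<Sum>v\<in>V. g v * q v)"
  proof (rule sum_mono)
    fix v assume v: "v \<in> V"
    then have vU: "v \<in> Uset d" using VU by blast
    have "(\<Sum>u\<in>{u \<in> U. v \<subseteq> u}. Tdown d C gs u * C^(2 * card u)) \<le> gs v"
      by (rule Tdown_facts(2)[OF Mw C U vU])
    also have "gs v \<le> g v" using le vU unfolding weight_le_def by blast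
    finally show "(\<Sum>u\<in>{u \<in> U. v \<subseteq> u}. Tdown d C gs u * C^(2 * card u)) * q v \<le> g v * q v"
      using q0[OF vU] by (rule mult_right_mono)
  qed
  also have "\<dots> \<le> infsum (\<lambda>v. g v * q v) (Uset d)"
  proof (rule finite_sum_le_infsum[OF _ fV VU])
    show "(\<lambda>v. g v * q v) summable_on Uset d"
      using qf_Mker[OF rkk w F, of a] unfolding q_def by (rule has_sum_imp_summable)
    show "\<And>v. v \<in> Uset d - V \<Longrightarrow> 0 \<le> g v * q v"
      using w q0 unfolding weights_def by simp
  qed
  finally show ?thesis unfolding q_def .
qed


theorem mainTheorem16:
  fixes d :: enat and D :: "'a set" and k l :: "'a \<Rightarrow> 'a \<Rightarrow> real"
    and \<gamma> \<gamma>s :: "nat set \<Rightarrow> real" and Cd :: real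
  assumes "D \<noteq> {}"
    and "repr_kernel D k" and "\<exists>x\<in>D. \<exists>y\<in>D. k x y \<noteq> 0"
    and "weights d \<gamma>" and "Zset d D \<gamma> k \<noteq> {}"
    and "repr_kernel D l" and "\<exists>x\<in>D. \<exists>y\<in>D. l x y \<noteq> 0"
    and "rkhs l D \<subseteq> rkhs (\<lambda>x y. 1 + k x y) D"
    and "Cd > 0"
    and "\<forall>f\<in>rkhs l D. rkhs_norm (\<lambda>x y. 1 + k x y) D f \<le> Cd * rkhs_norm l D f"
    and "Mweights d \<gamma>s" and "weight_le d \<gamma>s \<gamma>"
  shows "Zset d D \<gamma> k \<subseteq> Zset d D (Tdown d Cd \<gamma>s) l \<and>
    (\<forall>f\<in>rkhs (Mker d (Tdown d Cd \<gamma>s) l) (Zset d D (Tdown d Cd \<gamma>s) l).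
       f \<in> rkhs (Mker d \<gamma> k) (Zset d D \<gamma> k) \<and>
       rkhs_norm (Mker d \<gamma> k) (Zset d D \<gamma> k) f
         \<le> rkhs_norm (Mker d (Tdown d Cd \<gamma>s) l) (Zset d D (Tdown d Cd \<gamma>s) l) f)"
proof -
  note rkk = assms(2) and w = assms(4) and rkl = assms(6) and sub = assms(8) and C = assms(9)
    and nrm = assms(10) and Mw = assms(11) and le = assms(12)
  define T where "T = Tdown d Cd \<gamma>s"
  define ZK where "ZK = Zset d D \<gamma> k"
  define ZL where "ZL = Zset d D T l"
  define K where "K = Mker d \<gamma> k"
  define L where "L = Mker d T l"
  have rkP: "repr_kernel D (\<lambda>s t. Cd^2 * (1 + k s t) - l s t)"
    unfolding repr_kernel_iff
  proof (intro conjI allI impI)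
    have sk: "symon D k" and sl: "symon D l" using rk_sym[OF rkk order_refl] rk_sym[OF rkl order_refl] .
    show "symon D (\<lambda>s t. Cd^2 * (1 + k s t) - l s t)" unfolding symon_def
    proof (intro ballI)
      fix s t assume "s \<in> D" "t \<in> D"
      then have "k s t = k t s" "l s t = l t s" using sk sl unfolding symon_def by blast+
      then show "Cd^2 * (1 + k s t) - l s t = Cd^2 * (1 + k t s) - l t s" by simp
    qed
  next
    fix F assume F: "finite F \<and> F \<subseteq> D"
    show "psdon F (\<lambda>s t. Cd^2 * (1 + k s t) - l s t)" unfolding psdon_def
    proof
      fix a
      have "qf F l a \<le> Cd^2 * qf F (\<lambda>x y. 1 + k x y) a"
        by (rule D1[OF rkk rkl sub C nrm]) (use F in auto)
      then show "0 \<le> qf F (\<lambda>s t. Cd^2 * (1 + k s t) - l s t) a"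
        using qf_lin_kernel[of F "Cd^2" "\<lambda>x y. 1 + k x y" l a] by simp
    qed
  qed
  have T0: "T u \<ge> 0" if "u \<in> Uset d" for u unfolding T_def using Tdown_facts(1)[OF Mw C that] .
  have wT: "weights d T" unfolding weights_def using T0 by blast
  have key: "(\<Sum>u\<in>U. T u * qf F (prodk l u) a) \<le> infsum (\<lambda>v. \<gamma> v * qf F (prodk k v) a) (Uset d)"
    if "finite F" "F \<subseteq> ZK" "finite U" "U \<subseteq> Uset d" for F U a
    unfolding T_def by (rule key_partial[OF rkk rkl C rkP Mw le w]) (use that in \<open>auto simp: ZK_def\<close>)
  have incl: "ZK \<subseteq> ZL"
  proof
    fix x assume x: "x \<in> ZK"
    have xP: "x \<in> PiE (idx d) (\<lambda>_. D)" using x unfolding ZK_def Zset_def by auto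
    have "(\<lambda>u. T u * prodk l u x x) summable_on Uset d"
    proof (rule nonneg_bdd_above_summable_on)
      show "\<And>u. u \<in> Uset d \<Longrightarrow> 0 \<le> T u * prodk l u x x"
        using T0 prodk_bounds(2)[OF rkl _ xP xP] by simp
      show "bdd_above (sum (\<lambda>u. T u * prodk l u x x) ` {U. U \<subseteq> Uset d \<and> finite U})"
      proof (rule bdd_aboveI)
        fix s assume "s \<in> sum (\<lambda>u. T u * prodk l u x x) ` {U. U \<subseteq> Uset d \<and> finite U}"
        then obtain U where U: "U \<subseteq> Uset d" "finite U" and s: "s = (\<Sum>u\<in>U. T u * prodk l u x x)" by blast
        have "s = (\<Sum>u\<in>U. T u * qf {x} (prodk l u) (delta x))" unfolding s
          by (intro sum.cong refl) (simp add: qf_delta)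
        also have "\<dots> \<le> infsum (\<lambda>v. \<gamma> v * qf {x} (prodk k v) (delta x)) (Uset d)"
          by (rule key) (use U x in auto)
        finally show "s \<le> infsum (\<lambda>v. \<gamma> v * qf {x} (prodk k v) (delta x)) (Uset d)" .
      qed
    qed
    then show "x \<in> ZL" unfolding ZL_def Zset_def using xP by simp
  qed
  have rkL: "repr_kernel ZL L" unfolding ZL_def L_def by (rule Mker_rk[OF rkl wT])
  have rkK: "repr_kernel ZK K" unfolding ZK_def K_def by (rule Mker_rk[OF rkk w])
  have order: "qf F L a \<le> qf F K a" if F: "finite F" "F \<subseteq> ZK" for F a
  proof -
    have FL: "F \<subseteq> ZL" using F incl by blast
    have hL: "((\<lambda>u. T u * qf F (prodk l u) a) has_sum qf F L a) (Uset d)"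
      unfolding L_def by (rule qf_Mker[OF rkl wT F(1)]) (use FL in \<open>simp add: ZL_def\<close>)
    have hK: "((\<lambda>v. \<gamma> v * qf F (prodk k v) a) has_sum qf F K a) (Uset d)"
      unfolding K_def by (rule qf_Mker[OF rkk w F(1)]) (use F in \<open>simp add: ZK_def\<close>)
    have "qf F L a = infsum (\<lambda>u. T u * qf F (prodk l u) a) (Uset d)" using hL by (simp add: has_sum_iff)
    also have "\<dots> \<le> infsum (\<lambda>v. \<gamma> v * qf F (prodk k v) a) (Uset d)"
      by (rule infsum_le_finite_sums[OF has_sum_imp_summable[OF hL]]) (rule key[OF F])
    also have "\<dots> = qf F K a" using hK by (simp add: has_sum_iff)
    finally show ?thesis .
  qed
  have main: "f \<in> rkhs K ZK \<and> rkhs_norm K ZK f \<le> rkhs_norm L ZL f" if f: "f \<in> rkhs L ZL" for f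
  proof (rule rkhs_suff[OF rkK])
    show r0: "0 \<le> rkhs_norm L ZL f" by (rule rkhs_norm_nonneg[OF rkL f])
    fix F a assume F: "finite F" "F \<subseteq> ZK"
    have "(\<Sum>x\<in>F. a x * f x)^2 \<le> (rkhs_norm L ZL f)^2 * qf F L a"
      by (rule rkhs_bound[OF rkL f F(1)]) (use F incl in blast)
    also have "\<dots> \<le> (rkhs_norm L ZL f)^2 * qf F K a"
      by (rule mult_left_mono[OF order[OF F]]) simp
    finally show "(\<Sum>x\<in>F. a x * f x)^2 \<le> (rkhs_norm L ZL f)^2 * qf F K a" .
  qed
  show ?thesis using incl main unfolding ZK_def ZL_def K_def L_def T_def by blast
qed


end
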